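(* Let $I$ be a set with a non-trivial ultrafilter $\mathcal U$, $n\in\mathbb{N}$, $r>0$, and for each $i\in I$ let $E_i$ be an order continuous Banach lattice with a weak unit and $M_i$ an $(n,r)$-dispersed closed subspace of $E_i$. Then $(M_i)_{\mathcal U}$ is an $(n,r)$-dispersed subspace of $(E_i)_{\mathcal U}$.
   Context: A Banach lattice is order continuous if every net decreasing in order to $0$ converges in norm to $0$; $e\ge0$ is a weak unit if $|x|\wedge e=0$ implies $x=0$. Ultraproducts: $(X_i)_{\mathcal U}=\ell_\infty(I,X_i)/\{(x_i):\lim_{\mathcal U}\|x_i\|=0\}$, a Banach lattice when the $X_i$ are, with $[(x_i)]\le[(y_i)]$ iff there is $(z_i)$ with $\lim_{\mathcal U}\|z_i\|=0$ and $x_i+z_i\le y_i$ for all $i$; $(M_i)_{\mathcal U}$ is identified with the closed subspace $\{[(x_i)]: x_i\in M_i\}$ of $(E_i)_{\mathcal U}$. A closed subspace $M$ of a Banach lattice $F$ is $(n,r)$-dispersed if for every pairwise disjoint family $x_1,\dots,x_n$ of norm-one vectors of $F$ there is $i\in\{1,\dots,n\}$ with $\mathrm{dist}(x_i,M)\ge r$. *)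

theory Defs
  imports "HOL-Analysis.Analysis"
begin

definition is_ultrafilter :: "'i filter \<Rightarrow> bool" where
  "is_ultrafilter U \<longleftrightarrow> U \<noteq> bot \<and> (\<forall>P. eventually P U \<or> eventually (\<lambda>i. \<not> P i) U)"

text \<open>non-trivial = non-principal (free): contains no singleton\<close>
definition is_free_filter :: "'i filter \<Rightarrow> bool" where
  "is_free_filter U \<longleftrightarrow> (\<forall>i. \<not> eventually (\<lambda>j. j = i) U)"

record 'a blat =
  bl_carrier :: "'a set"
  bl_zero :: 'a
  bl_add :: "'a \<Rightarrow> 'a \<Rightarrow> 'a"
  bl_smult :: "real \<Rightarrow> 'a \<Rightarrow> 'a"
  bl_norm :: "'a \<Rightarrow> real"
  bl_le :: "'a \<Rightarrow> 'a \<Rightarrow> bool"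

definition bl_neg :: "'a blat \<Rightarrow> 'a \<Rightarrow> 'a" where
  "bl_neg E x = bl_smult E (-1) x"

definition bl_minus :: "'a blat \<Rightarrow> 'a \<Rightarrow> 'a \<Rightarrow> 'a" where
  "bl_minus E x y = bl_add E x (bl_neg E y)"

definition bl_vector_space :: "'a blat \<Rightarrow> bool" where
  "bl_vector_space E \<longleftrightarrow>
     bl_zero E \<in> bl_carrier E \<and>
     (\<forall>x\<in>bl_carrier E. \<forall>y\<in>bl_carrier E. bl_add E x y \<in> bl_carrier E) \<and>
     (\<forall>c. \<forall>x\<in>bl_carrier E. bl_smult E c x \<in> bl_carrier E) \<and>
     (\<forall>x\<in>bl_carrier E. \<forall>y\<in>bl_carrier E. \<forall>z\<in>bl_carrier E.
        bl_add E (bl_add E x y) z = bl_add E x (bl_add E y z)) \<and>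
     (\<forall>x\<in>bl_carrier E. \<forall>y\<in>bl_carrier E. bl_add E x y = bl_add E y x) \<and>
     (\<forall>x\<in>bl_carrier E. bl_add E x (bl_zero E) = x) \<and>
     (\<forall>x\<in>bl_carrier E. bl_add E x (bl_neg E x) = bl_zero E) \<and>
     (\<forall>x\<in>bl_carrier E. bl_smult E 1 x = x) \<and>
     (\<forall>a b. \<forall>x\<in>bl_carrier E. bl_smult E a (bl_smult E b x) = bl_smult E (a * b) x) \<and>
     (\<forall>a b. \<forall>x\<in>bl_carrier E. bl_smult E (a + b) x = bl_add E (bl_smult E a x) (bl_smult E b x)) \<and>
     (\<forall>a. \<forall>x\<in>bl_carrier E. \<forall>y\<in>bl_carrier E.
        bl_smult E a (bl_add E x y) = bl_add E (bl_smult E a x) (bl_smult E a y))"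

definition bl_normed :: "'a blat \<Rightarrow> bool" where
  "bl_normed E \<longleftrightarrow>
     (\<forall>x\<in>bl_carrier E. bl_norm E x \<ge> 0 \<and> (bl_norm E x = 0 \<longleftrightarrow> x = bl_zero E)) \<and>
     (\<forall>a. \<forall>x\<in>bl_carrier E. bl_norm E (bl_smult E a x) = \<bar>a\<bar> * bl_norm E x) \<and>
     (\<forall>x\<in>bl_carrier E. \<forall>y\<in>bl_carrier E. bl_norm E (bl_add E x y) \<le> bl_norm E x + bl_norm E y)"

definition bl_complete :: "'a blat \<Rightarrow> bool" where
  "bl_complete E \<longleftrightarrow>
     (\<forall>s::nat \<Rightarrow> 'a. (\<forall>k. s k \<in> bl_carrier E) \<and>
        (\<forall>e>0. \<exists>N. \<forall>m\<ge>N. \<forall>k\<ge>N. bl_norm E (bl_minus E (s m) (s k)) < e) \<longrightarrow>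
        (\<exists>x\<in>bl_carrier E. \<forall>e>0. \<exists>N. \<forall>k\<ge>N. bl_norm E (bl_minus E (s k) x) < e))"

definition bl_ordered :: "'a blat \<Rightarrow> bool" where
  "bl_ordered E \<longleftrightarrow>
     (\<forall>x y. bl_le E x y \<longrightarrow> x \<in> bl_carrier E \<and> y \<in> bl_carrier E) \<and>
     (\<forall>x\<in>bl_carrier E. bl_le E x x) \<and>
     (\<forall>x y. bl_le E x y \<and> bl_le E y x \<longrightarrow> x = y) \<and>
     (\<forall>x y z. bl_le E x y \<and> bl_le E y z \<longrightarrow> bl_le E x z) \<and>
     (\<forall>x y. \<forall>z\<in>bl_carrier E. bl_le E x y \<longrightarrow> bl_le E (bl_add E x z) (bl_add E y z)) \<and>
     (\<forall>x y. \<forall>c\<ge>0. bl_le E x y \<longrightarrow> bl_le E (bl_smult E c x) (bl_smult E c y))"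

definition bl_is_sup :: "'a blat \<Rightarrow> 'a \<Rightarrow> 'a \<Rightarrow> 'a \<Rightarrow> bool" where
  "bl_is_sup E x y z \<longleftrightarrow> z \<in> bl_carrier E \<and> bl_le E x z \<and> bl_le E y z \<and>
     (\<forall>w. bl_le E x w \<and> bl_le E y w \<longrightarrow> bl_le E z w)"

definition bl_is_inf :: "'a blat \<Rightarrow> 'a \<Rightarrow> 'a \<Rightarrow> 'a \<Rightarrow> bool" where
  "bl_is_inf E x y z \<longleftrightarrow> z \<in> bl_carrier E \<and> bl_le E z x \<and> bl_le E z y \<and>
     (\<forall>w. bl_le E w x \<and> bl_le E w y \<longrightarrow> bl_le E w z)"

definition bl_sup :: "'a blat \<Rightarrow> 'a \<Rightarrow> 'a \<Rightarrow> 'a" where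
  "bl_sup E x y = (THE z. bl_is_sup E x y z)"

definition bl_inf :: "'a blat \<Rightarrow> 'a \<Rightarrow> 'a \<Rightarrow> 'a" where
  "bl_inf E x y = (THE z. bl_is_inf E x y z)"

definition bl_abs :: "'a blat \<Rightarrow> 'a \<Rightarrow> 'a" where
  "bl_abs E x = bl_sup E x (bl_neg E x)"

definition bl_lattice :: "'a blat \<Rightarrow> bool" where
  "bl_lattice E \<longleftrightarrow> (\<forall>x\<in>bl_carrier E. \<forall>y\<in>bl_carrier E.
      (\<exists>z. bl_is_sup E x y z) \<and> (\<exists>z. bl_is_inf E x y z))"

definition banach_lattice :: "'a blat \<Rightarrow> bool" where
  "banach_lattice E \<longleftrightarrow> bl_vector_space E \<and> bl_normed E \<and> bl_complete E \<and>
     bl_ordered E \<and> bl_lattice E \<and>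
     (\<forall>x\<in>bl_carrier E. \<forall>y\<in>bl_carrier E.
        bl_le E (bl_abs E x) (bl_abs E y) \<longrightarrow> bl_norm E x \<le> bl_norm E y)"

text \<open>Order continuity: every net decreasing in order to 0 is norm null.  A decreasing net
  is represented by its (downward directed) range; the net is order-null iff the range has
  infimum 0, and norm-null iff the norms of its elements get arbitrarily small.\<close>
definition order_continuous :: "'a blat \<Rightarrow> bool" where
  "order_continuous E \<longleftrightarrow>
     (\<forall>D. D \<subseteq> bl_carrier E \<and> D \<noteq> {} \<and>
        (\<forall>a\<in>D. \<forall>b\<in>D. \<exists>c\<in>D. bl_le E c a \<and> bl_le E c b) \<and>
        (\<forall>d\<in>D. bl_le E (bl_zero E) d) \<and>
        (\<forall>w. (\<forall>d\<in>D. bl_le E w d) \<longrightarrow> bl_le E w (bl_zero E)) \<longrightarrow>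
        (\<forall>e>0. \<exists>d\<in>D. bl_norm E d < e))"

definition has_weak_unit :: "'a blat \<Rightarrow> bool" where
  "has_weak_unit E \<longleftrightarrow> (\<exists>e. bl_le E (bl_zero E) e \<and>
     (\<forall>x\<in>bl_carrier E. bl_inf E (bl_abs E x) e = bl_zero E \<longrightarrow> x = bl_zero E))"

definition bl_disjoint :: "'a blat \<Rightarrow> 'a \<Rightarrow> 'a \<Rightarrow> bool" where
  "bl_disjoint E x y \<longleftrightarrow> bl_inf E (bl_abs E x) (bl_abs E y) = bl_zero E"

definition closed_subspace :: "'a blat \<Rightarrow> 'a set \<Rightarrow> bool" where
  "closed_subspace E M \<longleftrightarrow> M \<subseteq> bl_carrier E \<and> bl_zero E \<in> M \<and>
     (\<forall>x\<in>M. \<forall>y\<in>M. bl_add E x y \<in> M) \<and> (\<forall>c. \<forall>x\<in>M. bl_smult E c x \<in> M) \<and>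
     (\<forall>s x. (\<forall>k::nat. s k \<in> M) \<and> x \<in> bl_carrier E \<and>
        (\<forall>e>0. \<exists>N. \<forall>k\<ge>N. bl_norm E (bl_minus E (s k) x) < e) \<longrightarrow> x \<in> M)"

definition bl_dist :: "'a blat \<Rightarrow> 'a \<Rightarrow> 'a set \<Rightarrow> real" where
  "bl_dist E x M = Inf ((\<lambda>m. bl_norm E (bl_minus E x m)) ` M)"

text \<open>(n,r)-dispersed closed subspace; the family x_1..x_n is indexed by {..<n}\<close>
definition dispersed :: "nat \<Rightarrow> real \<Rightarrow> 'a blat \<Rightarrow> 'a set \<Rightarrow> bool" where
  "dispersed n r F M \<longleftrightarrow> closed_subspace F M \<and>
     (\<forall>x::nat \<Rightarrow> 'a.
        (\<forall>k<n. x k \<in> bl_carrier F \<and> bl_norm F (x k) = 1) \<and>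
        (\<forall>k<n. \<forall>l<n. k \<noteq> l \<longrightarrow> bl_disjoint F (x k) (x l)) \<longrightarrow>
        (\<exists>k<n. bl_dist F (x k) M \<ge> r))"

definition up_linf :: "('i \<Rightarrow> 'a blat) \<Rightarrow> ('i \<Rightarrow> 'a) set" where
  "up_linf E = {x. (\<forall>i. x i \<in> bl_carrier (E i)) \<and> bdd_above (range (\<lambda>i. bl_norm (E i) (x i)))}"

definition up_null :: "('i \<Rightarrow> 'a blat) \<Rightarrow> 'i filter \<Rightarrow> ('i \<Rightarrow> 'a) set" where
  "up_null E U = {x \<in> up_linf E. ((\<lambda>i. bl_norm (E i) (x i)) \<longlongrightarrow> 0) U}"

definition up_class :: "('i \<Rightarrow> 'a blat) \<Rightarrow> 'i filter \<Rightarrow> ('i \<Rightarrow> 'a) \<Rightarrow> ('i \<Rightarrow> 'a) set" where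
  "up_class E U x = {y \<in> up_linf E. (\<lambda>i. bl_minus (E i) (x i) (y i)) \<in> up_null E U}"

definition up_rep :: "('i \<Rightarrow> 'a) set \<Rightarrow> 'i \<Rightarrow> 'a" where
  "up_rep X = (SOME x. x \<in> X)"

definition ultraproduct :: "('i \<Rightarrow> 'a blat) \<Rightarrow> 'i filter \<Rightarrow> ('i \<Rightarrow> 'a) set blat" where
  "ultraproduct E U =
     \<lparr> bl_carrier = up_class E U ` up_linf E,
       bl_zero = up_class E U (\<lambda>i. bl_zero (E i)),
       bl_add = (\<lambda>X Y. up_class E U (\<lambda>i. bl_add (E i) (up_rep X i) (up_rep Y i))),
       bl_smult = (\<lambda>c X. up_class E U (\<lambda>i. bl_smult (E i) c (up_rep X i))),
       bl_norm = (\<lambda>X. Lim U (\<lambda>i. bl_norm (E i) (up_rep X i))),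
       bl_le = (\<lambda>X Y. X \<in> up_class E U ` up_linf E \<and> Y \<in> up_class E U ` up_linf E \<and>
                  (\<exists>z\<in>up_null E U. \<forall>i.
                     bl_le (E i) (bl_add (E i) (up_rep X i) (z i)) (up_rep Y i))) \<rparr>"

text \<open>(M_i)_U identified with the subspace of classes of bounded families with x_i in M_i\<close>
definition ultraproduct_sub ::
  "('i \<Rightarrow> 'a blat) \<Rightarrow> 'i filter \<Rightarrow> ('i \<Rightarrow> 'a set) \<Rightarrow> ('i \<Rightarrow> 'a) set set" where
  "ultraproduct_sub E U M = up_class E U ` {x \<in> up_linf E. \<forall>i. x i \<in> M i}"

end

theory Submission
  imports Defs
begin


locale vsp =
  fixes E :: "'a blat"
  assumes vs: "bl_vector_space E"
begin

abbreviation "C \<equiv> bl_carrier E"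
abbreviation "va \<equiv> bl_add E"
abbreviation "vn \<equiv> bl_neg E"
abbreviation "vm \<equiv> bl_minus E"
abbreviation "vs \<equiv> bl_smult E"
abbreviation "vz \<equiv> bl_zero E"

lemma zero_in[simp]: "vz \<in> C" using vs unfolding bl_vector_space_def by simp
lemma add_in[simp]: "x \<in> C \<Longrightarrow> y \<in> C \<Longrightarrow> va x y \<in> C" using vs unfolding bl_vector_space_def by simp
lemma sm_in[simp]: "x \<in> C \<Longrightarrow> vs c x \<in> C" using vs unfolding bl_vector_space_def by simp
lemma neg_in[simp]: "x \<in> C \<Longrightarrow> vn x \<in> C" unfolding bl_neg_def by simp
lemma minus_in[simp]: "x \<in> C \<Longrightarrow> y \<in> C \<Longrightarrow> vm x y \<in> C" unfolding bl_minus_def by simp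
lemma assoc: "x \<in> C \<Longrightarrow> y \<in> C \<Longrightarrow> z \<in> C \<Longrightarrow> va (va x y) z = va x (va y z)"
proof -
  assume a: "x \<in> C" "y \<in> C" "z \<in> C"
  have "\<forall>x\<in>C. \<forall>y\<in>C. \<forall>z\<in>C. va (va x y) z = va x (va y z)" using vs unfolding bl_vector_space_def by (elim conjE)
  thus ?thesis using a by blast
qed
lemma comm: "x \<in> C \<Longrightarrow> y \<in> C \<Longrightarrow> va x y = va y x"
proof -
  assume a: "x \<in> C" "y \<in> C"
  have "\<forall>x\<in>C. \<forall>y\<in>C. va x y = va y x" using vs unfolding bl_vector_space_def by (elim conjE)
  thus ?thesis using a by blast
qed
lemma lcomm: "x \<in> C \<Longrightarrow> y \<in> C \<Longrightarrow> z \<in> C \<Longrightarrow> va x (va y z) = va y (va x z)"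
  by (metis assoc comm)
lemma add_zero[simp]: "x \<in> C \<Longrightarrow> va x vz = x" using vs unfolding bl_vector_space_def by simp
lemma zero_add[simp]: "x \<in> C \<Longrightarrow> va vz x = x" using comm add_zero zero_in by metis
lemma add_neg[simp]: "x \<in> C \<Longrightarrow> va x (vn x) = vz" using vs unfolding bl_vector_space_def by simp
lemma neg_add'[simp]: "x \<in> C \<Longrightarrow> va (vn x) x = vz" using comm add_neg neg_in by metis
lemma sm1[simp]: "x \<in> C \<Longrightarrow> vs 1 x = x" using vs unfolding bl_vector_space_def by simp
lemma smsm[simp]: "x \<in> C \<Longrightarrow> vs a (vs b x) = vs (a*b) x" using vs unfolding bl_vector_space_def by simp
lemma smdist1: "x \<in> C \<Longrightarrow> vs (a+b) x = va (vs a x) (vs b x)" using vs unfolding bl_vector_space_def by simp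
lemma smdist2: "x \<in> C \<Longrightarrow> y \<in> C \<Longrightarrow> vs a (va x y) = va (vs a x) (vs a y)" using vs unfolding bl_vector_space_def by simp
lemma cancel1[simp]: "x \<in> C \<Longrightarrow> y \<in> C \<Longrightarrow> va x (va (vn x) y) = y"
  by (simp flip: assoc)
lemma cancel2[simp]: "x \<in> C \<Longrightarrow> y \<in> C \<Longrightarrow> va (vn x) (va x y) = y"
  by (simp flip: assoc)
lemma add_lcancel: "x \<in> C \<Longrightarrow> y \<in> C \<Longrightarrow> z \<in> C \<Longrightarrow> va x y = va x z \<Longrightarrow> y = z"
  by (metis cancel2)
lemma sm0[simp]: "x \<in> C \<Longrightarrow> vs 0 x = vz"
proof -
  assume x: "x \<in> C"
  have "va (vs 0 x) (vs 0 x) = va (vs 0 x) vz" using smdist1[OF x, of 0 0] x by simp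
  thus ?thesis using add_lcancel x by (metis sm_in zero_in)
qed
lemma negneg[simp]: "x \<in> C \<Longrightarrow> vn (vn x) = x" unfolding bl_neg_def by simp
lemma sm_zero[simp]: "vs c vz = vz"
  by (metis sm0 smsm zero_in mult_zero_right)
lemma neg_zero[simp]: "vn vz = vz" unfolding bl_neg_def by simp
lemma neg_dist: "x \<in> C \<Longrightarrow> y \<in> C \<Longrightarrow> vn (va x y) = va (vn x) (vn y)"
  unfolding bl_neg_def by (simp add: smdist2)
lemma sm_neg: "x \<in> C \<Longrightarrow> vs c (vn x) = vn (vs c x)" unfolding bl_neg_def by (simp add: mult.commute)
lemma neg_sm: "x \<in> C \<Longrightarrow> vn (vs c x) = vs (-c) x" unfolding bl_neg_def by simp
lemma minus_def': "vm x y = va x (vn y)" by (simp add: bl_minus_def)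

lemma c3[simp]: "x \<in> C \<Longrightarrow> y \<in> C \<Longrightarrow> va x (va y (vn x)) = y"
  by (metis comm cancel1 neg_in)
lemma c3'[simp]: "x \<in> C \<Longrightarrow> y \<in> C \<Longrightarrow> va (vn x) (va y x) = y"
  by (metis comm cancel2 neg_in)
lemma c4[simp]: "x \<in> C \<Longrightarrow> y \<in> C \<Longrightarrow> w \<in> C \<Longrightarrow> va x (va y (va (vn x) w)) = va y w"
  by (metis lcomm cancel1 neg_in add_in)
lemma c4'[simp]: "x \<in> C \<Longrightarrow> y \<in> C \<Longrightarrow> w \<in> C \<Longrightarrow> va (vn x) (va y (va x w)) = va y w"
  by (metis lcomm cancel2 neg_in add_in)
lemma c5[simp]: "x \<in> C \<Longrightarrow> y \<in> C \<Longrightarrow> z \<in> C \<Longrightarrow> va x (va y (va z (vn x))) = va y z"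
  by (metis lcomm c3 neg_in add_in)
lemma c5'[simp]: "x \<in> C \<Longrightarrow> y \<in> C \<Longrightarrow> z \<in> C \<Longrightarrow> va (vn x) (va y (va z x)) = va y z"
  by (metis lcomm c3' neg_in add_in)
lemma c6[simp]: "x \<in> C \<Longrightarrow> y \<in> C \<Longrightarrow> z \<in> C \<Longrightarrow> w \<in> C \<Longrightarrow> va x (va y (va z (va (vn x) w))) = va y (va z w)"
  by (metis lcomm c4 neg_in add_in)
lemma c6'[simp]: "x \<in> C \<Longrightarrow> y \<in> C \<Longrightarrow> z \<in> C \<Longrightarrow> w \<in> C \<Longrightarrow> va (vn x) (va y (va z (va x w))) = va y (va z w)"
  by (metis lcomm c4' neg_in add_in)
lemma c7[simp]: "x \<in> C \<Longrightarrow> y \<in> C \<Longrightarrow> z \<in> C \<Longrightarrow> w \<in> C \<Longrightarrow> va x (va y (va z (va w (vn x)))) = va y (va z w)"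
  by (metis lcomm c5 neg_in add_in)
lemma c7'[simp]: "x \<in> C \<Longrightarrow> y \<in> C \<Longrightarrow> z \<in> C \<Longrightarrow> w \<in> C \<Longrightarrow> va (vn x) (va y (va z (va w x))) = va y (va z w)"
  by (metis lcomm c5' neg_in add_in)
lemma c8[simp]: "x \<in> C \<Longrightarrow> y \<in> C \<Longrightarrow> z \<in> C \<Longrightarrow> w \<in> C \<Longrightarrow> u \<in> C \<Longrightarrow> va x (va y (va z (va w (va (vn x) u)))) = va y (va z (va w u))"
  by (metis lcomm c6 neg_in add_in)
lemma c8'[simp]: "x \<in> C \<Longrightarrow> y \<in> C \<Longrightarrow> z \<in> C \<Longrightarrow> w \<in> C \<Longrightarrow> u \<in> C \<Longrightarrow> va (vn x) (va y (va z (va w (va x u)))) = va y (va z (va w u))"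
  by (metis lcomm c6' neg_in add_in)
lemma c9[simp]: "x \<in> C \<Longrightarrow> y \<in> C \<Longrightarrow> z \<in> C \<Longrightarrow> w \<in> C \<Longrightarrow> u \<in> C \<Longrightarrow> va x (va y (va z (va w (va u (vn x))))) = va y (va z (va w u))"
  by (metis lcomm c7 neg_in add_in)
lemma c9'[simp]: "x \<in> C \<Longrightarrow> y \<in> C \<Longrightarrow> z \<in> C \<Longrightarrow> w \<in> C \<Longrightarrow> u \<in> C \<Longrightarrow> va (vn x) (va y (va z (va w (va u x)))) = va y (va z (va w u))"
  by (metis lcomm c7' neg_in add_in)
lemma add_zero2[simp]: "x \<in> C \<Longrightarrow> y \<in> C \<Longrightarrow> va x (va vz y) = va x y" by simp

lemmas alg = minus_def' neg_dist assoc comm lcomm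

end



locale bl = vsp E for E :: "'a blat" +
  assumes BL: "banach_lattice E"
begin

abbreviation "le \<equiv> bl_le E"
abbreviation "nrm \<equiv> bl_norm E"
abbreviation "lsup \<equiv> bl_sup E"
abbreviation "linf \<equiv> bl_inf E"
abbreviation "ab \<equiv> bl_abs E"

lemma ORD: "bl_ordered E" using BL unfolding banach_lattice_def by blast
lemma NRM: "bl_normed E" using BL unfolding banach_lattice_def by blast
lemma LAT: "bl_lattice E" using BL unfolding banach_lattice_def by blast
lemma NMONO: "x \<in> C \<Longrightarrow> y \<in> C \<Longrightarrow> le (ab x) (ab y) \<Longrightarrow> nrm x \<le> nrm y"
  using BL unfolding banach_lattice_def by blast

lemma le_C: "le x y \<Longrightarrow> x \<in> C" "le x y \<Longrightarrow> y \<in> C"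
  using ORD unfolding bl_ordered_def by blast+
lemma le_refl[simp]: "x \<in> C \<Longrightarrow> le x x" using ORD unfolding bl_ordered_def by blast
lemma le_antisym: "le x y \<Longrightarrow> le y x \<Longrightarrow> x = y" using ORD unfolding bl_ordered_def by blast
lemma le_trans: "le x y \<Longrightarrow> le y z \<Longrightarrow> le x z" using ORD unfolding bl_ordered_def by blast
lemma le_add: "le x y \<Longrightarrow> z \<in> C \<Longrightarrow> le (va x z) (va y z)" using ORD unfolding bl_ordered_def by blast
lemma le_sm: "le x y \<Longrightarrow> c \<ge> 0 \<Longrightarrow> le (vs c x) (vs c y)" using ORD unfolding bl_ordered_def by blast
lemma le_addl: "le x y \<Longrightarrow> z \<in> C \<Longrightarrow> le (va z x) (va z y)"
  by (metis le_add le_C comm)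
lemma le_add2: "le x y \<Longrightarrow> le u v \<Longrightarrow> le (va x u) (va y v)"
  by (meson le_add le_addl le_C le_trans)
lemma le_neg: "le x y \<Longrightarrow> le (vn y) (vn x)"
proof -
  assume h: "le x y"
  have x: "x \<in> C" and y: "y \<in> C" using h le_C by auto
  have "le (va x (va (vn x) (vn y))) (va y (va (vn x) (vn y)))" using le_addl[OF h, of "va (vn x) (vn y)"] x y
    by (metis add_in neg_in comm)
  moreover have "va x (va (vn x) (vn y)) = vn y" using x y by simp
  moreover have "va y (va (vn x) (vn y)) = vn x" using x y c3[of y "vn x"] by simp
  ultimately show ?thesis by simp
qed
lemma le_neg_iff: "x \<in> C \<Longrightarrow> y \<in> C \<Longrightarrow> le (vn y) (vn x) \<longleftrightarrow> le x y"
  by (metis le_neg negneg)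
lemma le_sub: "le x y \<Longrightarrow> z \<in> C \<Longrightarrow> le (vm x z) (vm y z)"
  by (simp add: minus_def' le_add)
lemma le_subr: "le x y \<Longrightarrow> z \<in> C \<Longrightarrow> le (vm z y) (vm z x)"
  by (simp add: minus_def' le_addl le_neg)
lemma pos_add: "le vz a \<Longrightarrow> x \<in> C \<Longrightarrow> le x (va x a)"
  using le_addl[of vz a x] by simp
lemma pos_add': "le vz a \<Longrightarrow> x \<in> C \<Longrightarrow> le x (va a x)"
  by (metis pos_add comm le_C)
lemma neg_pos_le: "le vz a \<Longrightarrow> le (vn a) vz"
  using le_neg by fastforce
lemma sub_pos_le: "le vz a \<Longrightarrow> x \<in> C \<Longrightarrow> le (vm x a) x"
  using le_addl[OF neg_pos_le, of a x] by (simp add: minus_def')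

lemma sup_unique: "bl_is_sup E x y z1 \<Longrightarrow> bl_is_sup E x y z2 \<Longrightarrow> z1 = z2"
  unfolding bl_is_sup_def by (metis le_antisym)
lemma inf_unique: "bl_is_inf E x y z1 \<Longrightarrow> bl_is_inf E x y z2 \<Longrightarrow> z1 = z2"
  unfolding bl_is_inf_def by (metis le_antisym)
lemma sup_is: "x \<in> C \<Longrightarrow> y \<in> C \<Longrightarrow> bl_is_sup E x y (lsup x y)"
proof -
  assume "x \<in> C" "y \<in> C"
  then obtain z where z: "bl_is_sup E x y z" using LAT unfolding bl_lattice_def by blast
  show ?thesis unfolding bl_sup_def by (rule theI[of _ z]) (use z sup_unique in auto)
qed
lemma inf_is: "x \<in> C \<Longrightarrow> y \<in> C \<Longrightarrow> bl_is_inf E x y (linf x y)"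
proof -
  assume "x \<in> C" "y \<in> C"
  then obtain z where z: "bl_is_inf E x y z" using LAT unfolding bl_lattice_def by blast
  show ?thesis unfolding bl_inf_def by (rule theI[of _ z]) (use z inf_unique in auto)
qed
lemma sup_in[simp]: "x \<in> C \<Longrightarrow> y \<in> C \<Longrightarrow> lsup x y \<in> C"
  using sup_is[of x y] by (auto simp: bl_is_sup_def)
lemma inf_in[simp]: "x \<in> C \<Longrightarrow> y \<in> C \<Longrightarrow> linf x y \<in> C"
  using inf_is[of x y] by (auto simp: bl_is_inf_def)
lemma sup_ge1: "x \<in> C \<Longrightarrow> y \<in> C \<Longrightarrow> le x (lsup x y)"
  using sup_is[of x y] by (auto simp: bl_is_sup_def)
lemma sup_ge2: "x \<in> C \<Longrightarrow> y \<in> C \<Longrightarrow> le y (lsup x y)"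
  using sup_is[of x y] by (auto simp: bl_is_sup_def)
lemma sup_least: "le x w \<Longrightarrow> le y w \<Longrightarrow> le (lsup x y) w"
proof -
  assume a: "le x w" "le y w"
  have "bl_is_sup E x y (lsup x y)" using sup_is le_C a by blast
  thus ?thesis using a unfolding bl_is_sup_def by blast
qed
lemma inf_le1: "x \<in> C \<Longrightarrow> y \<in> C \<Longrightarrow> le (linf x y) x"
  using inf_is[of x y] by (auto simp: bl_is_inf_def)
lemma inf_le2: "x \<in> C \<Longrightarrow> y \<in> C \<Longrightarrow> le (linf x y) y"
  using inf_is[of x y] by (auto simp: bl_is_inf_def)
lemma inf_greatest: "le w x \<Longrightarrow> le w y \<Longrightarrow> le w (linf x y)"
proof -
  assume a: "le w x" "le w y"
  have "bl_is_inf E x y (linf x y)" using inf_is le_C a by blast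
  thus ?thesis using a unfolding bl_is_inf_def by blast
qed
lemma sup_eqI: "z \<in> C \<Longrightarrow> le x z \<Longrightarrow> le y z \<Longrightarrow> (\<And>w. le x w \<Longrightarrow> le y w \<Longrightarrow> le z w) \<Longrightarrow> lsup x y = z"
proof -
  assume a: "z \<in> C" "le x z" "le y z" and h: "\<And>w. le x w \<Longrightarrow> le y w \<Longrightarrow> le z w"
  have x: "x \<in> C" and y: "y \<in> C" using a le_C by auto
  show ?thesis by (rule le_antisym[OF sup_least[OF a(2,3)] h[OF sup_ge1[OF x y] sup_ge2[OF x y]]])
qed
lemma inf_eqI: "z \<in> C \<Longrightarrow> le z x \<Longrightarrow> le z y \<Longrightarrow> (\<And>w. le w x \<Longrightarrow> le w y \<Longrightarrow> le w z) \<Longrightarrow> linf x y = z"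
proof -
  assume a: "z \<in> C" "le z x" "le z y" and h: "\<And>w. le w x \<Longrightarrow> le w y \<Longrightarrow> le w z"
  have x: "x \<in> C" and y: "y \<in> C" using a le_C by auto
  show ?thesis by (rule le_antisym[OF h[OF inf_le1[OF x y] inf_le2[OF x y]] inf_greatest[OF a(2,3)]])
qed
lemma sup_comm: "x \<in> C \<Longrightarrow> y \<in> C \<Longrightarrow> lsup x y = lsup y x"
  by (rule sup_eqI) (auto intro: sup_ge1 sup_ge2 sup_least)
lemma inf_comm: "x \<in> C \<Longrightarrow> y \<in> C \<Longrightarrow> linf x y = linf y x"
  by (rule inf_eqI) (auto intro: inf_le1 inf_le2 inf_greatest)
lemma sup_mono: "le x x' \<Longrightarrow> le y y' \<Longrightarrow> le (lsup x y) (lsup x' y')"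
proof -
  assume a: "le x x'" "le y y'"
  have "x' \<in> C" "y' \<in> C" using a le_C by auto
  hence "le x' (lsup x' y')" "le y' (lsup x' y')" by (auto intro: sup_ge1 sup_ge2)
  thus ?thesis using a by (intro sup_least) (erule le_trans, assumption)+
qed
lemma inf_mono: "le x x' \<Longrightarrow> le y y' \<Longrightarrow> le (linf x y) (linf x' y')"
proof -
  assume a: "le x x'" "le y y'"
  have "x \<in> C" "y \<in> C" using a le_C by auto
  hence "le (linf x y) x" "le (linf x y) y" by (auto intro: inf_le1 inf_le2)
  thus ?thesis using a by (intro inf_greatest) (erule le_trans, assumption)+
qed

lemma sup_transl: "x \<in> C \<Longrightarrow> y \<in> C \<Longrightarrow> c \<in> C \<Longrightarrow> va c (lsup x y) = lsup (va c x) (va c y)"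
proof -
  assume x: "x \<in> C" and y: "y \<in> C" and c: "c \<in> C"
  show ?thesis
  proof (rule sym, rule sup_eqI)
    show "le (va c x) (va c (lsup x y))" "le (va c y) (va c (lsup x y))"
      using x y c by (auto intro!: le_addl sup_ge1 sup_ge2)
    fix w assume a: "le (va c x) w" "le (va c y) w"
    have "le (va (vn c) (va c x)) (va (vn c) w)" "le (va (vn c) (va c y)) (va (vn c) w)"
      using a c by (auto intro!: le_addl)
    hence "le (lsup x y) (va (vn c) w)" using x y c by (auto intro!: sup_least)
    hence "le (va c (lsup x y)) (va c (va (vn c) w))" using c le_addl by blast
    moreover have "w \<in> C" using a le_C by blast
    ultimately show "le (va c (lsup x y)) w" using c by simp
  qed (use x y c in simp)
qed
lemma inf_transl: "x \<in> C \<Longrightarrow> y \<in> C \<Longrightarrow> c \<in> C \<Longrightarrow> va c (linf x y) = linf (va c x) (va c y)"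
proof -
  assume x: "x \<in> C" and y: "y \<in> C" and c: "c \<in> C"
  show ?thesis
  proof (rule sym, rule inf_eqI)
    show "le (va c (linf x y)) (va c x)" "le (va c (linf x y)) (va c y)"
      using x y c by (auto intro!: le_addl inf_le1 inf_le2)
    fix w assume a: "le w (va c x)" "le w (va c y)"
    have "le (va (vn c) w) (va (vn c) (va c x))" "le (va (vn c) w) (va (vn c) (va c y))"
      using a c by (auto intro!: le_addl)
    hence "le (va (vn c) w) (linf x y)" using x y c by (auto intro!: inf_greatest)
    hence "le (va c (va (vn c) w)) (va c (linf x y))" using c le_addl by blast
    moreover have "w \<in> C" using a le_C by blast
    ultimately show "le w (va c (linf x y))" using c by simp
  qed (use x y c in simp)
qed
lemma neg_sup: "x \<in> C \<Longrightarrow> y \<in> C \<Longrightarrow> vn (lsup x y) = linf (vn x) (vn y)"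
proof -
  assume x: "x \<in> C" and y: "y \<in> C"
  show ?thesis
  proof (rule sym, rule inf_eqI)
    show "le (vn (lsup x y)) (vn x)" "le (vn (lsup x y)) (vn y)"
      using x y by (auto intro!: le_neg sup_ge1 sup_ge2)
    fix w assume a: "le w (vn x)" "le w (vn y)"
    hence "le x (vn w)" "le y (vn w)" using le_neg x y by fastforce+
    hence "le (lsup x y) (vn w)" by (rule sup_least)
    thus "le w (vn (lsup x y))" using le_neg a le_C by fastforce
  qed (use x y in simp)
qed
lemma neg_inf: "x \<in> C \<Longrightarrow> y \<in> C \<Longrightarrow> vn (linf x y) = lsup (vn x) (vn y)"
  by (metis neg_sup neg_in negneg sup_in)

lemma sup_sm: "c > 0 \<Longrightarrow> x \<in> C \<Longrightarrow> y \<in> C \<Longrightarrow> vs c (lsup x y) = lsup (vs c x) (vs c y)"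
proof -
  assume c: "c > 0" and x: "x \<in> C" and y: "y \<in> C"
  show ?thesis
  proof (rule sym, rule sup_eqI)
    show "le (vs c x) (vs c (lsup x y))" "le (vs c y) (vs c (lsup x y))"
      using x y c by (auto intro!: le_sm sup_ge1 sup_ge2)
    fix w assume a: "le (vs c x) w" "le (vs c y) w"
    have "le (vs (1/c) (vs c x)) (vs (1/c) w)" "le (vs (1/c) (vs c y)) (vs (1/c) w)"
      using a c by (auto intro!: le_sm)
    hence "le (lsup x y) (vs (1/c) w)" using x y c by (auto intro!: sup_least)
    hence "le (vs c (lsup x y)) (vs c (vs (1/c) w))" using c le_sm by auto
    moreover have "w \<in> C" using a le_C by blast
    ultimately show "le (vs c (lsup x y)) w" using c by simp
  qed (use x y c in simp)
qed
lemma inf_sm: "c > 0 \<Longrightarrow> x \<in> C \<Longrightarrow> y \<in> C \<Longrightarrow> vs c (linf x y) = linf (vs c x) (vs c y)"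
proof -
  assume c: "c > 0" and x: "x \<in> C" and y: "y \<in> C"
  have "vs c (linf x y) = vs c (vn (lsup (vn x) (vn y)))" using neg_sup[of "vn x" "vn y"] x y by simp
  also have "\<dots> = vn (lsup (vs c (vn x)) (vs c (vn y)))" using sup_sm[OF c] x y by (simp add: sm_neg)
  also have "\<dots> = linf (vs c x) (vs c y)" using x y by (simp add: neg_sup sm_neg)
  finally show ?thesis .
qed

definition pp where "pp x = lsup x vz"
definition np where "np x = lsup (vn x) vz"
lemma ab_def': "ab x = lsup x (vn x)" by (simp add: bl_abs_def)
lemma ab_in[simp]: "x \<in> C \<Longrightarrow> ab x \<in> C" by (simp add: ab_def')
lemma pp_in[simp]: "x \<in> C \<Longrightarrow> pp x \<in> C" by (simp add: pp_def)
lemma np_in[simp]: "x \<in> C \<Longrightarrow> np x \<in> C" by (simp add: np_def)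
lemma ab_ge: "x \<in> C \<Longrightarrow> le x (ab x)" by (simp add: ab_def' sup_ge1)
lemma ab_ge': "x \<in> C \<Longrightarrow> le (vn x) (ab x)" by (simp add: ab_def' sup_ge2)
lemma ab_least: "le x t \<Longrightarrow> le (vn x) t \<Longrightarrow> le (ab x) t" by (simp add: ab_def' sup_least)
lemma ab_pos: "x \<in> C \<Longrightarrow> le vz (ab x)"
proof -
  assume x: "x \<in> C"
  have "le (va x (vn x)) (va (ab x) (ab x))" using le_add2[OF ab_ge[OF x] ab_ge'[OF x]] .
  hence "le vz (vs 2 (ab x))" using x smdist1[of "ab x" 1 1] by simp
  hence "le (vs (1/2) vz) (vs (1/2) (vs 2 (ab x)))" by (rule le_sm) simp
  thus ?thesis using x by simp
qed
lemma ab_of_pos: "le vz w \<Longrightarrow> ab w = w"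
  by (metis ab_ge ab_least le_C le_antisym le_refl le_trans neg_pos_le)
lemma ab_sm: "c > 0 \<Longrightarrow> x \<in> C \<Longrightarrow> ab (vs c x) = vs c (ab x)"
  by (simp add: ab_def' sup_sm sm_neg)
lemma pp_pos: "x \<in> C \<Longrightarrow> le vz (pp x)" by (simp add: pp_def sup_ge2)
lemma np_pos: "x \<in> C \<Longrightarrow> le vz (np x)" by (simp add: np_def sup_ge2)
lemma pp_le_ab: "x \<in> C \<Longrightarrow> le (pp x) (ab x)" by (simp add: pp_def sup_least ab_ge ab_pos)
lemma np_le_ab: "x \<in> C \<Longrightarrow> le (np x) (ab x)" by (simp add: np_def sup_least ab_ge' ab_pos)
lemma pp_minus: "x \<in> C \<Longrightarrow> vm (pp x) x = np x"
proof -
  assume x: "x \<in> C"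
  have "vm (pp x) x = va (vn x) (lsup x vz)" using x by (simp add: pp_def minus_def' comm)
  also have "\<dots> = lsup vz (vn x)" using x by (simp add: sup_transl)
  finally show ?thesis using x by (simp add: np_def sup_comm)
qed
lemma pp_np: "x \<in> C \<Longrightarrow> vm (pp x) (np x) = x"
  by (simp flip: pp_minus add: minus_def' neg_dist)
lemma pp_mono: "le x y \<Longrightarrow> le (pp x) (pp y)" by (simp add: pp_def sup_mono)
lemma inf_pp_np: "x \<in> C \<Longrightarrow> linf (pp x) (np x) = vz"
proof -
  assume x: "x \<in> C"
  have "linf (pp x) (np x) = linf (va (pp x) vz) (va (pp x) (vn x))"
    using x by (simp flip: pp_minus add: minus_def')
  also have "\<dots> = va (pp x) (linf vz (vn x))" using x by (simp add: inf_transl)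
  also have "linf vz (vn x) = vn (pp x)" using x by (simp add: pp_def neg_sup inf_comm)
  finally show ?thesis using x by simp
qed
lemma inf_pos: "le vz x \<Longrightarrow> le vz y \<Longrightarrow> le vz (linf x y)" by (rule inf_greatest)
lemma inf_zero_pos: "le vz a \<Longrightarrow> linf a vz = vz"
  by (metis inf_eqI le_C(2) le_refl zero_in)

lemma nrm_ge0[simp]: "x \<in> C \<Longrightarrow> nrm x \<ge> 0" using NRM unfolding bl_normed_def by blast
lemma nrm_eq0: "x \<in> C \<Longrightarrow> nrm x = 0 \<longleftrightarrow> x = vz" using NRM unfolding bl_normed_def by blast
lemma nrm_zero[simp]: "nrm vz = 0" using nrm_eq0 zero_in by blast
lemma nrm_sm: "x \<in> C \<Longrightarrow> nrm (vs a x) = \<bar>a\<bar> * nrm x" using NRM unfolding bl_normed_def by blast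
lemma nrm_tri: "x \<in> C \<Longrightarrow> y \<in> C \<Longrightarrow> nrm (va x y) \<le> nrm x + nrm y" using NRM unfolding bl_normed_def by blast
lemma nrm_neg[simp]: "x \<in> C \<Longrightarrow> nrm (vn x) = nrm x" by (simp add: bl_neg_def nrm_sm)
lemma nrm_ab[simp]: "x \<in> C \<Longrightarrow> nrm (ab x) = nrm x"
proof -
  assume x: "x \<in> C"
  have "ab (ab x) = ab x" by (rule ab_of_pos[OF ab_pos[OF x]])
  thus ?thesis using x NMONO[of x "ab x"] NMONO[of "ab x" x] by (simp add: ab_pos)
qed
lemma nrm_mono: "v \<in> C \<Longrightarrow> le (ab v) w \<Longrightarrow> nrm v \<le> nrm w"
proof -
  assume v: "v \<in> C" and h: "le (ab v) w"
  have "le vz w" using le_trans[OF ab_pos[OF v] h] .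
  hence "ab w = w" by (rule ab_of_pos)
  thus ?thesis using NMONO[OF v le_C(2)[OF h]] h by simp
qed
lemma nrm_mono_pos: "le vz v \<Longrightarrow> le v w \<Longrightarrow> nrm v \<le> nrm w"
  by (metis ab_of_pos le_C(2) nrm_mono)
lemma dist_sym: "x \<in> C \<Longrightarrow> y \<in> C \<Longrightarrow> nrm (vm x y) = nrm (vm y x)"
  by (metis nrm_neg minus_in minus_def' neg_dist negneg comm neg_in)
lemma dist_tri: "x \<in> C \<Longrightarrow> y \<in> C \<Longrightarrow> z \<in> C \<Longrightarrow> nrm (vm x z) \<le> nrm (vm x y) + nrm (vm y z)"
proof -
  assume a: "x \<in> C" "y \<in> C" "z \<in> C"
  have "vm x z = va (vm x y) (vm y z)" using a by (simp add: alg)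
  thus ?thesis using nrm_tri a by simp
qed
lemma nrm_minus_ge: "x \<in> C \<Longrightarrow> y \<in> C \<Longrightarrow> nrm x - nrm y \<le> nrm (vm x y)"
  using dist_tri[of x y vz] by (simp add: minus_def')
lemma nrm_minus_le: "x \<in> C \<Longrightarrow> y \<in> C \<Longrightarrow> nrm (vm x y) \<le> nrm x + nrm y"
  using nrm_tri[of x "vn y"] by (simp add: minus_def')
end



fun lsum :: "'a blat \<Rightarrow> (nat \<Rightarrow> 'a) \<Rightarrow> nat \<Rightarrow> 'a" where
  "lsum E f 0 = bl_zero E"
| "lsum E f (Suc m) = bl_add E (lsum E f m) (f m)"

context bl begin

lemmas [trans] = le_trans

lemma lsum_in: "(\<And>l. l < m \<Longrightarrow> f l \<in> C) \<Longrightarrow> lsum E f m \<in> C"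
  by (induction m) auto
lemma lsum_pos: "(\<And>l. l < m \<Longrightarrow> le vz (f l)) \<Longrightarrow> le vz (lsum E f m)"
proof (induction m)
  case 0 thus ?case by simp
next
  case (Suc m)
  have "le (va vz vz) (va (lsum E f m) (f m))" using Suc by (intro le_add2) auto
  thus ?case by simp
qed
lemma lsum_ge: "(\<And>l. l < m \<Longrightarrow> le vz (f l)) \<Longrightarrow> j < m \<Longrightarrow> le (f j) (lsum E f m)"
proof (induction m)
  case 0 thus ?case by simp
next
  case (Suc m)
  have fin: "\<And>l. l < m \<Longrightarrow> f l \<in> C" using Suc.prems(1) le_C by (meson less_SucI)
  have S: "le vz (lsum E f m)" using Suc.prems(1) by (intro lsum_pos) auto
  have fm: "le vz (f m)" using Suc.prems(1) by auto
  show ?case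
  proof (cases "j = m")
    case True
    thus ?thesis using pos_add'[OF S, of "f m"] fm le_C by simp
  next
    case False
    hence "le (f j) (lsum E f m)" using Suc by auto
    moreover have "le (lsum E f m) (va (lsum E f m) (f m))" using pos_add[OF fm] lsum_in[OF fin] .
    ultimately show ?thesis by (simp add: le_trans)
  qed
qed
lemma lsum_nrm: "(\<And>l. l < m \<Longrightarrow> f l \<in> C) \<Longrightarrow> nrm (lsum E f m) \<le> (\<Sum>l<m. nrm (f l))"
proof (induction m)
  case 0 thus ?case by simp
next
  case (Suc m)
  have "nrm (lsum E f (Suc m)) \<le> nrm (lsum E f m) + nrm (f m)"
    using Suc.prems by (simp add: nrm_tri lsum_in)
  also have "\<dots> \<le> (\<Sum>l<m. nrm (f l)) + nrm (f m)" using Suc by simp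
  finally show ?case by simp
qed

lemma key_inf: "le vz a \<Longrightarrow> le vz b \<Longrightarrow> le vz c \<Longrightarrow> le (linf a (va b c)) (va (linf a b) (linf a c))"
proof -
  assume a0: "le vz a" and b0: "le vz b" and c0: "le vz c"
  have a: "a \<in> C" and b: "b \<in> C" and c: "c \<in> C" using a0 b0 c0 le_C by auto
  let ?L = "linf a (va b c)"
  have L1: "le ?L a" and L2: "le ?L (va b c)" using a b c by (auto intro: inf_le1 inf_le2)
  have e1: "va (linf a b) (linf a c) = linf (va a (linf a c)) (va b (linf a c))"
    using a b c inf_transl[of a b "linf a c"] comm by simp
  have e2: "va a (linf a c) = linf (va a a) (va a c)" using a c by (simp add: inf_transl)
  have e3: "va b (linf a c) = linf (va b a) (va b c)" using a b c by (simp add: inf_transl)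
  have "le ?L (va a a)" using le_trans[OF L1 pos_add[OF a0 a]] .
  moreover have "le ?L (va a c)" using le_trans[OF L1 pos_add[OF c0 a]] .
  ultimately have "le ?L (va a (linf a c))" unfolding e2 by (rule inf_greatest)
  moreover have "le ?L (va b a)" using le_trans[OF L1 pos_add'[OF b0 a]] .
  hence "le ?L (va b (linf a c))" unfolding e3 using L2 by (rule inf_greatest)
  ultimately show ?thesis unfolding e1 by (rule inf_greatest)
qed

lemma inf_lsum: "le vz a \<Longrightarrow> (\<And>l. l < m \<Longrightarrow> le vz (f l)) \<Longrightarrow>
   le (linf a (lsum E f m)) (lsum E (\<lambda>l. linf a (f l)) m)"
proof (induction m)
  case 0 thus ?case using inf_zero_pos by (simp add: le_C)
next
  case (Suc m)
  have a: "a \<in> C" using Suc le_C by auto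
  have fin: "\<And>l. l < Suc m \<Longrightarrow> f l \<in> C" using Suc.prems(2) le_C by blast
  have S: "le vz (lsum E f m)" using Suc.prems(2) by (intro lsum_pos) auto
  have "le (linf a (lsum E f (Suc m))) (va (linf a (lsum E f m)) (linf a (f m)))"
    using key_inf[OF Suc.prems(1) S Suc.prems(2)[of m]] by simp
  also have "le \<dots> (va (lsum E (\<lambda>l. linf a (f l)) m) (linf a (f m)))"
    using Suc a fin by (intro le_add) auto
  finally show ?case by simp
qed

definition "sk x n k = lsum E (\<lambda>l. if l = k then vz else ab (x l)) n"
definition "lift x n k = va (vm (x k) (linf (pp (x k)) (sk x n k))) (linf (np (x k)) (sk x n k))"

lemma sk_pos: "(\<And>j. j < n \<Longrightarrow> x j \<in> C) \<Longrightarrow> le vz (sk x n k)"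
  unfolding sk_def by (rule lsum_pos) (auto simp: ab_pos)
lemma sk_in: "(\<And>j. j < n \<Longrightarrow> x j \<in> C) \<Longrightarrow> sk x n k \<in> C"
  using sk_pos le_C by blast
lemma sk_ge: "(\<And>j. j < n \<Longrightarrow> x j \<in> C) \<Longrightarrow> l < n \<Longrightarrow> l \<noteq> k \<Longrightarrow> le (ab (x l)) (sk x n k)"
  unfolding sk_def using lsum_ge[of n "\<lambda>l. if l = k then vz else ab (x l)" l] by (auto simp: ab_pos)

lemma lift_in: "(\<And>j. j < n \<Longrightarrow> x j \<in> C) \<Longrightarrow> k < n \<Longrightarrow> lift x n k \<in> C"
  unfolding lift_def using sk_in by simp

lemma pp_sub_inf: "p \<in> C \<Longrightarrow> s \<in> C \<Longrightarrow> vm p (linf p s) = pp (vm p s)"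
proof -
  assume p: "p \<in> C" and s: "s \<in> C"
  have "vm p (linf p s) = va p (lsup (vn p) (vn s))" using p s by (simp add: minus_def' neg_inf)
  also have "\<dots> = lsup vz (vm p s)" using p s by (simp add: sup_transl minus_def')
  finally show ?thesis using p s by (simp add: pp_def sup_comm)
qed

lemma lift_ab: "(\<And>j. j < n \<Longrightarrow> x j \<in> C) \<Longrightarrow> k < n \<Longrightarrow> le (ab (lift x n k)) (pp (vm (ab (x k)) (sk x n k)))"
proof -
  assume X: "\<And>j. j < n \<Longrightarrow> x j \<in> C" and k: "k < n"
  let ?x = "x k" let ?s = "sk x n k"
  have x: "?x \<in> C" and s: "?s \<in> C" using X k sk_in by auto
  let ?P = "vm (pp ?x) (linf (pp ?x) ?s)" and ?Q = "vm (np ?x) (linf (np ?x) ?s)"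
  let ?R = "pp (vm (ab ?x) ?s)"
  have eq: "lift x n k = vm ?P ?Q"
  proof -
    have "lift x n k = va (vm (vm (pp ?x) (np ?x)) (linf (pp ?x) ?s)) (linf (np ?x) ?s)"
      unfolding lift_def using pp_np[OF x] by simp
    thus ?thesis using x s by (simp add: alg)
  qed
  have P: "?P = pp (vm (pp ?x) ?s)" and Q: "?Q = pp (vm (np ?x) ?s)" using x s by (simp_all add: pp_sub_inf)
  have PR: "le ?P ?R" unfolding P using x s by (intro pp_mono le_sub pp_le_ab)
  have QR: "le ?Q ?R" unfolding Q using x s by (intro pp_mono le_sub np_le_ab)
  have P0: "le vz ?P" unfolding P using x s by (simp add: pp_pos)
  have Q0: "le vz ?Q" unfolding Q using x s by (simp add: pp_pos)
  have Pin: "?P \<in> C" and Qin: "?Q \<in> C" using x s by auto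
  have "le (vm ?P ?Q) ?P" by (rule sub_pos_le[OF Q0 Pin])
  hence 1: "le (vm ?P ?Q) ?R" using PR le_trans by blast
  have "vn (vm ?P ?Q) = vm ?Q ?P" using Pin Qin by (simp add: alg)
  moreover have "le (vm ?Q ?P) ?Q" by (rule sub_pos_le[OF P0 Qin])
  ultimately have 2: "le (vn (vm ?P ?Q)) ?R" using QR le_trans by simp
  show ?thesis unfolding eq using ab_least[OF 1 2] .
qed

lemma lift_disj: "(\<And>j. j < n \<Longrightarrow> x j \<in> C) \<Longrightarrow> k < n \<Longrightarrow> l < n \<Longrightarrow> k \<noteq> l \<Longrightarrow>
   linf (ab (lift x n k)) (ab (lift x n l)) = vz"
proof -
  assume X: "\<And>j. j < n \<Longrightarrow> x j \<in> C" and k: "k < n" and l: "l < n" and kl: "k \<noteq> l"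
  have xk: "x k \<in> C" and xl: "x l \<in> C" using X k l by auto
  let ?u = "vm (ab (x k)) (ab (x l))"
  have u: "?u \<in> C" using xk xl by simp
  have "le (ab (lift x n k)) (pp (vm (ab (x k)) (sk x n k)))" by (rule lift_ab[OF X k])
  also have "le \<dots> (pp ?u)" using sk_ge[OF X l kl[symmetric]] xk by (intro pp_mono le_subr) auto
  finally have A: "le (ab (lift x n k)) (pp ?u)" .
  have "le (ab (lift x n l)) (pp (vm (ab (x l)) (sk x n l)))" by (rule lift_ab[OF X l])
  also have "le \<dots> (pp (vm (ab (x l)) (ab (x k))))" using sk_ge[OF X k kl] xl by (intro pp_mono le_subr) auto
  also have "vm (ab (x l)) (ab (x k)) = vn ?u" using xk xl by (simp add: alg)
  finally have B: "le (ab (lift x n l)) (np ?u)" by (simp add: np_def pp_def)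
  have "le (linf (ab (lift x n k)) (ab (lift x n l))) (linf (pp ?u) (np ?u))" by (rule inf_mono[OF A B])
  hence "le (linf (ab (lift x n k)) (ab (lift x n l))) vz" using inf_pp_np[OF u] by simp
  moreover have "le vz (linf (ab (lift x n k)) (ab (lift x n l)))"
    using lift_in[OF X k] lift_in[OF X l] by (intro inf_pos ab_pos)
  ultimately show ?thesis by (rule le_antisym)
qed

lemma lift_close: "(\<And>j. j < n \<Longrightarrow> x j \<in> C) \<Longrightarrow> k < n \<Longrightarrow>
   nrm (vm (x k) (lift x n k)) \<le> (\<Sum>l<n. if l = k then 0 else nrm (linf (ab (x k)) (ab (x l))))"
proof -
  assume X: "\<And>j. j < n \<Longrightarrow> x j \<in> C" and k: "k < n"
  let ?x = "x k" let ?s = "sk x n k" let ?a = "ab ?x"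
  have x: "?x \<in> C" and s: "?s \<in> C" using X k sk_in by auto
  let ?G = "linf (pp ?x) ?s" and ?H = "linf (np ?x) ?s"
  have Gin: "?G \<in> C" and Hin: "?H \<in> C" using x s by auto
  have eq: "vm ?x (lift x n k) = vm ?G ?H" unfolding lift_def using x Gin Hin by (simp add: alg)
  have s0: "le vz ?s" using sk_pos X by blast
  have G0: "le vz ?G" using x s0 by (intro inf_pos pp_pos)
  have H0: "le vz ?H" using x s0 by (intro inf_pos np_pos)
  have GA: "le ?G (linf ?a ?s)" using x s by (intro inf_mono pp_le_ab) auto
  have HA: "le ?H (linf ?a ?s)" using x s by (intro inf_mono np_le_ab) auto
  have 1: "le (vm ?G ?H) (linf ?a ?s)" using le_trans[OF sub_pos_le[OF H0 Gin] GA] .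
  have "vn (vm ?G ?H) = vm ?H ?G" using Gin Hin by (simp add: alg)
  hence 2: "le (vn (vm ?G ?H)) (linf ?a ?s)" using le_trans[OF sub_pos_le[OF G0 Hin] HA] by simp
  have "nrm (vm ?x (lift x n k)) \<le> nrm (linf ?a ?s)"
    unfolding eq using Gin Hin by (intro nrm_mono ab_least[OF 1 2]) auto
  also have "\<dots> \<le> nrm (lsum E (\<lambda>l. linf ?a (if l = k then vz else ab (x l))) n)"
    unfolding sk_def using x X
    by (intro nrm_mono_pos inf_lsum inf_pos ab_pos lsum_pos) (auto simp: ab_pos)
  also have "\<dots> \<le> (\<Sum>l<n. nrm (linf ?a (if l = k then vz else ab (x l))))"
    using x X by (intro lsum_nrm) auto
  also have "\<dots> = (\<Sum>l<n. if l = k then 0 else nrm (linf ?a (ab (x l))))"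
    using x by (intro sum.cong) (auto simp: inf_zero_pos ab_pos)
  finally show ?thesis .
qed

lemma le_sm_mono: "le vz u \<Longrightarrow> 0 \<le> c \<Longrightarrow> c \<le> d \<Longrightarrow> le (vs c u) (vs d u)"
proof -
  assume u0: "le vz u" and c: "0 \<le> c" "c \<le> d"
  have u: "u \<in> C" using u0 le_C by auto
  have "vs d u = va (vs c u) (vs (d - c) u)" using smdist1[OF u, of c "d - c"] by simp
  moreover have "le vz (vs (d - c) u)" using le_sm[OF u0, of "d - c"] c by simp
  ultimately show ?thesis using pos_add u by simp
qed

lemma disj_scale: "le vz u \<Longrightarrow> le vz v \<Longrightarrow> linf u v = vz \<Longrightarrow> c > 0 \<Longrightarrow> d > 0 \<Longrightarrow>
   linf (vs c u) (vs d v) = vz"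
proof -
  assume u0: "le vz u" and v0: "le vz v" and uv: "linf u v = vz" and c: "c > 0" and d: "d > 0"
  have u: "u \<in> C" and v: "v \<in> C" using u0 v0 le_C by auto
  let ?m = "max c d"
  have "le (linf (vs c u) (vs d v)) (linf (vs ?m u) (vs ?m v))"
    using c d u0 v0 by (intro inf_mono le_sm_mono) auto
  also have "linf (vs ?m u) (vs ?m v) = vs ?m (linf u v)" using c u v by (simp add: inf_sm)
  finally have "le (linf (vs c u) (vs d v)) vz" using uv by simp
  moreover have "le vz (linf (vs c u) (vs d v))"
    using le_sm[OF u0, of c] le_sm[OF v0, of d] c d by (intro inf_pos) auto
  ultimately show ?thesis by (rule le_antisym)
qed

lemma disj_scale': "x \<in> C \<Longrightarrow> y \<in> C \<Longrightarrow> bl_disjoint E x y \<Longrightarrow> c > 0 \<Longrightarrow> d > 0 \<Longrightarrow>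
   bl_disjoint E (vs c x) (vs d y)"
  unfolding bl_disjoint_def by (simp add: ab_sm disj_scale ab_pos)

end



lemma bl_of: "banach_lattice E \<Longrightarrow> bl E"
  by (simp add: bl_def bl_axioms_def vsp_def banach_lattice_def)
lemma vsp_of: "banach_lattice E \<Longrightarrow> vsp E"
  by (simp add: vsp_def banach_lattice_def)

lemma null_cmp: "eventually (\<lambda>i. \<bar>f i\<bar> \<le> g i) F \<Longrightarrow> (g \<longlongrightarrow> 0) F \<Longrightarrow> ((f::_\<Rightarrow>real) \<longlongrightarrow> 0) F"
  by (rule Lim_null_comparison) auto

lemma ultra_conv:
  assumes UF: "is_ultrafilter U" and B: "\<And>i. \<bar>f i\<bar> \<le> (B::real)"
  shows "\<exists>l. (f \<longlongrightarrow> l) U"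
proof -
  let ?F = "filtermap f U"
  have Fb: "?F \<noteq> bot" using UF by (simp add: filtermap_bot_iff is_ultrafilter_def)
  have "\<forall>i. f i \<in> {-B..B}" using B by (metis abs_le_iff atLeastAtMost_iff minus_le_iff)
  hence "eventually (\<lambda>x. x \<in> {-B..B}) ?F" by (simp add: eventually_filtermap always_eventually)
  then obtain l where l: "inf (nhds l) ?F \<noteq> bot"
    using compact_filter[THEN iffD1, OF compact_Icc] Fb by blast
  have "(f \<longlongrightarrow> l) U"
  proof (rule topological_tendstoI)
    fix S assume S: "open S" "l \<in> S"
    show "eventually (\<lambda>i. f i \<in> S) U"
    proof (rule ccontr)
      assume n: "\<not> eventually (\<lambda>i. f i \<in> S) U"
      hence "eventually (\<lambda>i. \<not> f i \<in> S) U" using UF unfolding is_ultrafilter_def by blast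
      hence e1: "eventually (\<lambda>x. x \<notin> S) ?F" by (simp add: eventually_filtermap)
      have e2: "eventually (\<lambda>x. x \<in> S) (nhds l)" using S by (rule eventually_nhds_in_open)
      have "eventually (\<lambda>x. False) (inf (nhds l) ?F)"
        unfolding eventually_inf using e1 e2 by blast
      thus False using l by (simp add: eventually_False)
    qed
  qed
  thus ?thesis by blast
qed

lemma ultra_pick:
  assumes UF: "is_ultrafilter U" and ev: "eventually (\<lambda>i. \<exists>k<(n::nat). P k i) U"
  shows "\<exists>k<n. eventually (P k) U"
proof (rule ccontr)
  assume "\<not> ?thesis"
  hence "\<forall>k\<in>{..<n}. eventually (\<lambda>i. \<not> P k i) U" using UF unfolding is_ultrafilter_def by auto
  hence "eventually (\<lambda>i. \<forall>k\<in>{..<n}. \<not> P k i) U" by (intro eventually_ball_finite) auto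
  with ev have "eventually (\<lambda>i. False) U" by (rule eventually_elim2) auto
  thus False using UF by (simp add: is_ultrafilter_def eventually_False)
qed

context bl begin

lemma nrm_inf_le: "x \<in> C \<Longrightarrow> y \<in> C \<Longrightarrow> nrm (linf x y) \<le> nrm x + nrm y"
proof -
  assume x: "x \<in> C" and y: "y \<in> C"
  let ?T = "va (ab x) (ab y)"
  have "le (linf x y) x" using inf_le1 x y .
  also have "le x (ab x)" using ab_ge x .
  also have "le (ab x) ?T" using pos_add[OF ab_pos[OF y]] x by simp
  finally have 1: "le (linf x y) ?T" .
  have "vn (linf x y) = lsup (vn x) (vn y)" using neg_inf x y by simp
  moreover have "le (vn x) ?T" using le_trans[OF ab_ge'[OF x] pos_add[OF ab_pos[OF y]]] x by simp
  moreover have "le (vn y) ?T" using le_trans[OF ab_ge'[OF y] pos_add'[OF ab_pos[OF x]]] y by simp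
  ultimately have 2: "le (vn (linf x y)) ?T" by (simp add: sup_least)
  have "nrm (linf x y) \<le> nrm ?T" using x y by (intro nrm_mono ab_least[OF 1 2]) auto
  also have "\<dots> \<le> nrm x + nrm y" using nrm_tri[of "ab x" "ab y"] x y by simp
  finally show ?thesis .
qed

lemma nrm_sup_le: "x \<in> C \<Longrightarrow> y \<in> C \<Longrightarrow> nrm (lsup x y) \<le> nrm x + nrm y"
proof -
  assume x: "x \<in> C" and y: "y \<in> C"
  have "lsup x y = vn (linf (vn x) (vn y))" using neg_inf[of "vn x" "vn y"] x y by simp
  thus ?thesis using nrm_inf_le[of "vn x" "vn y"] x y by simp
qed

lemma sub_le: "x \<in> C \<Longrightarrow> z \<in> C \<Longrightarrow> le (va x z) w \<Longrightarrow> le x (vm w z)"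
proof -
  assume x: "x \<in> C" and z: "z \<in> C" and h: "le (va x z) w"
  have "le (vm (va x z) z) (vm w z)" using le_sub[OF h z] .
  thus ?thesis using x z by (simp add: minus_def' assoc)
qed

lemma sup_bound: "x \<in> C \<Longrightarrow> y \<in> C \<Longrightarrow> z \<in> C \<Longrightarrow> z' \<in> C \<Longrightarrow> le (va x z) w \<Longrightarrow> le (va y z') w \<Longrightarrow>
   le (va (lsup x y) (vn (va (ab z) (ab z')))) w"
proof -
  assume x: "x \<in> C" and y: "y \<in> C" and z: "z \<in> C" and z': "z' \<in> C" and h1: "le (va x z) w" and h2: "le (va y z') w"
  have w: "w \<in> C" using h1 le_C by blast
  let ?T = "va (ab z) (ab z')"
  have T: "?T \<in> C" using z z' by simp
  have "le x (vm w z)" using sub_le[OF x z h1] .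
  also have "le (vm w z) (va w ?T)"
  proof -
    have "le (vn z) ?T" using le_trans[OF ab_ge'[OF z] pos_add[OF ab_pos[OF z']]] z by simp
    thus ?thesis using le_addl[of "vn z" ?T w] w by (simp add: minus_def')
  qed
  finally have 1: "le x (va w ?T)" .
  have "le y (vm w z')" using sub_le[OF y z' h2] .
  also have "le (vm w z') (va w ?T)"
  proof -
    have "le (vn z') ?T" using le_trans[OF ab_ge'[OF z'] pos_add'[OF ab_pos[OF z]]] z' by simp
    thus ?thesis using le_addl[of "vn z'" ?T w] w by (simp add: minus_def')
  qed
  finally have 2: "le y (va w ?T)" .
  have "le (lsup x y) (va w ?T)" using sup_least[OF 1 2] .
  hence "le (va (lsup x y) (vn ?T)) (va (va w ?T) (vn ?T))" using le_add T by simp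
  thus ?thesis using w T by (simp add: assoc)
qed

lemma inf_bound: "w \<in> C \<Longrightarrow> z \<in> C \<Longrightarrow> z' \<in> C \<Longrightarrow> le (va w z) x \<Longrightarrow> le (va w z') y \<Longrightarrow>
   le (va w (vn (va (ab z) (ab z')))) (linf x y)"
proof -
  assume w: "w \<in> C" and z: "z \<in> C" and z': "z' \<in> C" and h1: "le (va w z) x" and h2: "le (va w z') y"
  let ?T = "va (ab z) (ab z')"
  have T: "?T \<in> C" using z z' by simp
  have "le (vn z) ?T" using le_trans[OF ab_ge'[OF z] pos_add[OF ab_pos[OF z']]] z by simp
  hence "le (vn ?T) z" using le_neg z by fastforce
  hence "le (va w (vn ?T)) (va w z)" using le_addl w by blast
  hence 1: "le (va w (vn ?T)) x" using h1 le_trans by blast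
  have "le (vn z') ?T" using le_trans[OF ab_ge'[OF z'] pos_add'[OF ab_pos[OF z]]] z' by simp
  hence "le (vn ?T) z'" using le_neg z' by fastforce
  hence "le (va w (vn ?T)) (va w z')" using le_addl w by blast
  hence 2: "le (va w (vn ?T)) y" using h2 le_trans by blast
  show ?thesis using inf_greatest[OF 1 2] .
qed

lemma antisym_bound: "x \<in> C \<Longrightarrow> y \<in> C \<Longrightarrow> z \<in> C \<Longrightarrow> z' \<in> C \<Longrightarrow> le (va x z) y \<Longrightarrow> le (va y z') x \<Longrightarrow>
   nrm (vm x y) \<le> 2 * nrm z + nrm z'"
proof -
  assume x: "x \<in> C" and y: "y \<in> C" and z: "z \<in> C" and z': "z' \<in> C" and h1: "le (va x z) y" and h2: "le (va y z') x"
  let ?w = "vm y (va x z)"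
  have w: "?w \<in> C" using x y z by simp
  have w0: "le vz ?w" using le_sub[OF h1, of "va x z"] x z by (simp add: minus_def')
  have "le (vm (va y z') (va x z)) (vm x (va x z))" using le_sub[OF h2, of "va x z"] x z by simp
  moreover have "vm (va y z') (va x z) = va ?w z'" using x y z z' by (simp add: alg)
  moreover have "vm x (va x z) = vn z" using x z by (simp add: alg)
  ultimately have "le (va ?w z') (vn z)" by simp
  hence "le (vm (va ?w z') z') (vm (vn z) z')" using le_sub z' by blast
  hence "le ?w (vn (va z z'))" using w z z' by (simp add: alg)
  hence "nrm ?w \<le> nrm (vn (va z z'))" using nrm_mono_pos[OF w0] by blast
  also have "\<dots> \<le> nrm z + nrm z'" using nrm_tri z z' by simp
  finally have 1: "nrm ?w \<le> nrm z + nrm z'" .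
  have "vm x y = vn (va ?w z)" using x y z by (simp add: alg)
  hence "nrm (vm x y) \<le> nrm ?w + nrm z" using nrm_tri[OF w z] w z by simp
  thus ?thesis using 1 by simp
qed

end

locale up =
  fixes E :: "'i \<Rightarrow> 'a blat" and U :: "'i filter"
  assumes BLi: "\<And>i. banach_lattice (E i)" and UF: "is_ultrafilter U"
begin

lemma V: "vsp (E i)" using BLi vsp_of by blast
lemma B: "bl (E i)" using BLi bl_of by blast
lemma Unb: "U \<noteq> bot" using UF is_ultrafilter_def by blast

lemmas zero_in[simp] = vsp.zero_in[OF V]
lemmas add_in[simp] = vsp.add_in[OF V]
lemmas sm_in[simp] = vsp.sm_in[OF V]
lemmas neg_in[simp] = vsp.neg_in[OF V]
lemmas minus_in[simp] = vsp.minus_in[OF V]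
lemmas alg = vsp.alg[OF V]
lemmas cancel1[simp] = vsp.cancel1[OF V]
lemmas cancel2[simp] = vsp.cancel2[OF V]
lemmas c3[simp] = vsp.c3[OF V] lemmas c3'[simp] = vsp.c3'[OF V]
lemmas c4[simp] = vsp.c4[OF V] lemmas c4'[simp] = vsp.c4'[OF V]
lemmas c5[simp] = vsp.c5[OF V] lemmas c5'[simp] = vsp.c5'[OF V]
lemmas c6[simp] = vsp.c6[OF V] lemmas c6'[simp] = vsp.c6'[OF V]
lemmas c7[simp] = vsp.c7[OF V] lemmas c7'[simp] = vsp.c7'[OF V]
lemmas c8[simp] = vsp.c8[OF V] lemmas c8'[simp] = vsp.c8'[OF V]
lemmas c9[simp] = vsp.c9[OF V] lemmas c9'[simp] = vsp.c9'[OF V]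
lemmas add_zero[simp] = vsp.add_zero[OF V]
lemmas zero_add[simp] = vsp.zero_add[OF V]
lemmas add_neg[simp] = vsp.add_neg[OF V]
lemmas neg_add'[simp] = vsp.neg_add'[OF V]
lemmas negneg[simp] = vsp.negneg[OF V]
lemmas neg_zero[simp] = vsp.neg_zero[OF V]
lemmas sm_zero[simp] = vsp.sm_zero[OF V]
lemmas sm1[simp] = vsp.sm1[OF V]
lemmas smsm[simp] = vsp.smsm[OF V]
lemmas add_zero2[simp] = vsp.add_zero2[OF V]
lemmas minus_def' = vsp.minus_def'[OF V]
lemmas smdist2 = vsp.smdist2[OF V]
lemmas sm_neg = vsp.sm_neg[OF V]
lemmas neg_sm = vsp.neg_sm[OF V]
lemmas nrm_ge0[simp] = bl.nrm_ge0[OF B]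
lemmas nrm_zero[simp] = bl.nrm_zero[OF B]
lemmas nrm_neg[simp] = bl.nrm_neg[OF B]
lemmas nrm_sm = bl.nrm_sm[OF B]
lemmas nrm_tri = bl.nrm_tri[OF B]
lemmas dist_sym = bl.dist_sym[OF B]
lemmas dist_tri = bl.dist_tri[OF B]
lemmas nrm_minus_ge = bl.nrm_minus_ge[OF B]
lemmas nrm_minus_le = bl.nrm_minus_le[OF B]

abbreviation "L \<equiv> up_linf E"
abbreviation "N \<equiv> up_null E U"
abbreviation "cl \<equiv> up_class E U"
abbreviation "UP \<equiv> ultraproduct E U"
abbreviation "nm i \<equiv> bl_norm (E i)"

definition "eqv x y \<longleftrightarrow> x \<in> L \<and> y \<in> L \<and> ((\<lambda>i. nm i (bl_minus (E i) (x i) (y i))) \<longlongrightarrow> 0) U"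

lemma L_iff: "x \<in> L \<longleftrightarrow> (\<forall>i. x i \<in> bl_carrier (E i)) \<and> (\<exists>K. \<forall>i. nm i (x i) \<le> K)"
  unfolding up_linf_def bdd_above_def by auto

lemma LI: "(\<And>i. x i \<in> bl_carrier (E i)) \<Longrightarrow> (\<And>i. nm i (x i) \<le> K) \<Longrightarrow> x \<in> L"
  unfolding L_iff by blast
lemma LD: "x \<in> L \<Longrightarrow> x i \<in> bl_carrier (E i)" unfolding L_iff by blast
lemma LB: "x \<in> L \<Longrightarrow> \<exists>K. \<forall>i. nm i (x i) \<le> K" unfolding L_iff by blast

lemma L_add: "x \<in> L \<Longrightarrow> y \<in> L \<Longrightarrow> (\<lambda>i. bl_add (E i) (x i) (y i)) \<in> L"
proof -
  assume x: "x \<in> L" and y: "y \<in> L"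
  obtain K1 K2 where "\<forall>i. nm i (x i) \<le> K1" "\<forall>i. nm i (y i) \<le> K2" using LB x y by metis
  hence "\<And>i. nm i (bl_add (E i) (x i) (y i)) \<le> K1 + K2"
    using x y LD by (meson add_mono order.trans nrm_tri)
  thus ?thesis using x y LD by (intro LI[of _ "K1 + K2"]) auto
qed
lemma L_sm: "x \<in> L \<Longrightarrow> (\<lambda>i. bl_smult (E i) c (x i)) \<in> L"
proof -
  assume x: "x \<in> L"
  obtain K where "\<forall>i. nm i (x i) \<le> K" using LB x by metis
  thus ?thesis using x LD by (intro LI[of _ "\<bar>c\<bar> * K"]) (auto simp: nrm_sm mult_left_mono)
qed
lemma L_neg: "x \<in> L \<Longrightarrow> (\<lambda>i. bl_neg (E i) (x i)) \<in> L"
  using L_sm[of x "-1"] by (simp add: bl_neg_def)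
lemma L_minus: "x \<in> L \<Longrightarrow> y \<in> L \<Longrightarrow> (\<lambda>i. bl_minus (E i) (x i) (y i)) \<in> L"
  using L_add[OF _ L_neg] by (simp add: bl_minus_def)
lemma L_zero: "(\<lambda>i. bl_zero (E i)) \<in> L" by (rule LI[of _ 0]) auto
lemma L_dom: "(\<And>i. x i \<in> bl_carrier (E i)) \<Longrightarrow> y \<in> L \<Longrightarrow> (\<And>i. nm i (x i) \<le> nm i (y i)) \<Longrightarrow> x \<in> L"
proof -
  assume a: "\<And>i. x i \<in> bl_carrier (E i)" "y \<in> L" "\<And>i. nm i (x i) \<le> nm i (y i)"
  obtain K where "\<forall>i. nm i (y i) \<le> K" using LB a(2) by blast
  hence "\<And>i. nm i (x i) \<le> K" using a(3) order.trans by blast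
  thus ?thesis by (rule LI[OF a(1)])
qed

lemma eqv_refl: "x \<in> L \<Longrightarrow> eqv x x"
  unfolding eqv_def using LD by (simp add: bl_minus_def)
lemma eqv_sym: "eqv x y \<Longrightarrow> eqv y x"
proof -
  assume e: "eqv x y"
  hence x: "x \<in> L" and y: "y \<in> L" unfolding eqv_def by auto
  have "(\<lambda>i. nm i (bl_minus (E i) (y i) (x i))) = (\<lambda>i. nm i (bl_minus (E i) (x i) (y i)))"
    by (rule ext) (simp add: dist_sym LD x y)
  thus ?thesis using e unfolding eqv_def by simp
qed
lemma eqv_trans: "eqv x y \<Longrightarrow> eqv y z \<Longrightarrow> eqv x z"
proof -
  assume a: "eqv x y" "eqv y z"
  hence L3: "x \<in> L" "y \<in> L" "z \<in> L" unfolding eqv_def by auto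
  have "((\<lambda>i. nm i (bl_minus (E i) (x i) (y i)) + nm i (bl_minus (E i) (y i) (z i))) \<longlongrightarrow> 0 + 0) U"
    using a unfolding eqv_def by (intro tendsto_add) auto
  hence g: "((\<lambda>i. nm i (bl_minus (E i) (x i) (y i)) + nm i (bl_minus (E i) (y i) (z i))) \<longlongrightarrow> 0) U" by simp
  have "\<forall>i. \<bar>nm i (bl_minus (E i) (x i) (z i))\<bar> \<le> nm i (bl_minus (E i) (x i) (y i)) + nm i (bl_minus (E i) (y i) (z i))"
    using L3 LD dist_tri by simp
  hence "((\<lambda>i. nm i (bl_minus (E i) (x i) (z i))) \<longlongrightarrow> 0) U"
    by (intro null_cmp[OF _ g] always_eventually)
  thus ?thesis using L3 unfolding eqv_def by auto
qed

lemma N_iff: "z \<in> N \<longleftrightarrow> z \<in> L \<and> ((\<lambda>i. nm i (z i)) \<longlongrightarrow> 0) U"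
  unfolding up_null_def by auto

lemma cl_iff: "y \<in> cl x \<longleftrightarrow> y \<in> L \<and> (\<lambda>i. bl_minus (E i) (x i) (y i)) \<in> N"
  unfolding up_class_def by auto

lemma cl_eqv: "x \<in> L \<Longrightarrow> y \<in> cl x \<longleftrightarrow> eqv x y"
  unfolding cl_iff N_iff eqv_def using L_minus by auto

lemma cl_eq: "x \<in> L \<Longrightarrow> y \<in> L \<Longrightarrow> cl x = cl y \<longleftrightarrow> eqv x y"
proof
  assume x: "x \<in> L" and y: "y \<in> L"
  { assume "cl x = cl y"
    hence "y \<in> cl x" using y eqv_refl cl_eqv by auto
    thus "eqv x y" using cl_eqv x by auto }
  { assume e: "eqv x y"
    show "cl x = cl y"
    proof (rule set_eqI)
      fix w
      have "w \<in> cl x \<longleftrightarrow> eqv x w" using cl_eqv[OF x] .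
      moreover have "w \<in> cl y \<longleftrightarrow> eqv y w" using cl_eqv[OF y] .
      moreover have "eqv x w \<longleftrightarrow> eqv y w" using e eqv_sym eqv_trans by blast
      ultimately show "w \<in> cl x \<longleftrightarrow> w \<in> cl y" by simp
    qed }
qed

lemma rep_cl: "x \<in> L \<Longrightarrow> up_rep (cl x) \<in> cl x"
  unfolding up_rep_def by (rule someI[of _ x]) (simp add: cl_eqv eqv_refl)
lemma rep_eqv: "x \<in> L \<Longrightarrow> eqv x (up_rep (cl x))"
  using rep_cl cl_eqv by blast
lemma rep_L: "x \<in> L \<Longrightarrow> up_rep (cl x) \<in> L"
  using rep_eqv eqv_def by blast

lemma carrier_UP: "bl_carrier UP = cl ` L" by (simp add: ultraproduct_def)

lemma carrier_rep: "X \<in> bl_carrier UP \<Longrightarrow> up_rep X \<in> L \<and> cl (up_rep X) = X"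
proof -
  assume "X \<in> bl_carrier UP"
  then obtain x where x: "x \<in> L" "X = cl x" by (auto simp: carrier_UP)
  have "cl (up_rep X) = X" using cl_eq[OF rep_L[OF x(1)] x(1)] eqv_sym[OF rep_eqv[OF x(1)]] x(2) by simp
  thus ?thesis using rep_L[OF x(1)] x(2) by simp
qed

lemma bdd_norm: "x \<in> L \<Longrightarrow> \<exists>l. ((\<lambda>i. nm i (x i)) \<longlongrightarrow> l) U"
proof -
  assume x: "x \<in> L"
  obtain K where "\<forall>i. nm i (x i) \<le> K" using LB x by metis
  hence "\<And>i. \<bar>nm i (x i)\<bar> \<le> K" using x LD by auto
  thus ?thesis by (rule ultra_conv[OF UF])
qed

lemma eqv_norm: "eqv x y \<Longrightarrow> ((\<lambda>i. nm i (x i)) \<longlongrightarrow> l) U \<Longrightarrow> ((\<lambda>i. nm i (y i)) \<longlongrightarrow> l) U"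
proof -
  assume e: "eqv x y" and t: "((\<lambda>i. nm i (x i)) \<longlongrightarrow> l) U"
  have x: "x \<in> L" and y: "y \<in> L" using e eqv_def by auto
  have d: "((\<lambda>i. nm i (bl_minus (E i) (x i) (y i))) \<longlongrightarrow> 0) U" using e eqv_def by auto
  have "((\<lambda>i. nm i (y i) - nm i (x i)) \<longlongrightarrow> 0) U"
  proof (rule null_cmp[OF _ d], rule always_eventually, rule allI)
    fix i
    have "nm i (y i) - nm i (x i) \<le> nm i (bl_minus (E i) (y i) (x i))" using x y LD nrm_minus_ge by blast
    moreover have "nm i (x i) - nm i (y i) \<le> nm i (bl_minus (E i) (x i) (y i))" using x y LD nrm_minus_ge by blast
    ultimately show "\<bar>nm i (y i) - nm i (x i)\<bar> \<le> nm i (bl_minus (E i) (x i) (y i))"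
      using x y LD dist_sym by (metis abs_le_iff minus_diff_eq)
  qed
  from tendsto_add[OF this t] show ?thesis by simp
qed

lemma norm_cl: "x \<in> L \<Longrightarrow> ((\<lambda>i. nm i (x i)) \<longlongrightarrow> bl_norm UP (cl x)) U"
proof -
  assume x: "x \<in> L"
  obtain l where l: "((\<lambda>i. nm i (x i)) \<longlongrightarrow> l) U" using bdd_norm x by blast
  have "((\<lambda>i. nm i (up_rep (cl x) i)) \<longlongrightarrow> l) U" using eqv_norm[OF rep_eqv[OF x] l] .
  hence "bl_norm UP (cl x) = l" using Unb by (simp add: ultraproduct_def tendsto_Lim)
  thus ?thesis using l by simp
qed

definition "padd x y = (\<lambda>i. bl_add (E i) (x i) (y i))"
definition "psm c x = (\<lambda>i. bl_smult (E i) c (x i))"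
definition "pneg x = (\<lambda>i. bl_neg (E i) (x i))"
definition "pmin x y = (\<lambda>i. bl_minus (E i) (x i) (y i))"
definition "pzero = (\<lambda>i. bl_zero (E i))"
definition "psup x y = (\<lambda>i. bl_sup (E i) (x i) (y i))"
definition "pinf x y = (\<lambda>i. bl_inf (E i) (x i) (y i))"
definition "pabs x = (\<lambda>i. bl_abs (E i) (x i))"

lemmas sup_in[simp] = bl.sup_in[OF B]
lemmas inf_in[simp] = bl.inf_in[OF B]
lemmas ab_in[simp] = bl.ab_in[OF B]

lemma padd_L[simp]: "x \<in> L \<Longrightarrow> y \<in> L \<Longrightarrow> padd x y \<in> L" using L_add padd_def by simp
lemma psm_L[simp]: "x \<in> L \<Longrightarrow> psm c x \<in> L" using L_sm psm_def by simp
lemma pneg_L[simp]: "x \<in> L \<Longrightarrow> pneg x \<in> L" using L_neg pneg_def by simp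
lemma pmin_L[simp]: "x \<in> L \<Longrightarrow> y \<in> L \<Longrightarrow> pmin x y \<in> L" using L_minus pmin_def by simp
lemma pzero_L[simp]: "pzero \<in> L" using L_zero pzero_def by simp
lemma pabs_L[simp]: "x \<in> L \<Longrightarrow> pabs x \<in> L"
  unfolding pabs_def by (rule L_dom[of _ x]) (auto simp: LD bl.nrm_ab[OF B])
lemma pinf_L[simp]: "x \<in> L \<Longrightarrow> y \<in> L \<Longrightarrow> pinf x y \<in> L"
proof -
  assume x: "x \<in> L" and y: "y \<in> L"
  obtain K1 K2 where K: "\<forall>i. nm i (x i) \<le> K1" "\<forall>i. nm i (y i) \<le> K2" using LB x y by metis
  show ?thesis unfolding pinf_def
  proof (rule LI)
    fix i
    have "nm i (bl_inf (E i) (x i) (y i)) \<le> nm i (x i) + nm i (y i)" using bl.nrm_inf_le[OF B] x y LD by blast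
    thus "nm i (bl_inf (E i) (x i) (y i)) \<le> K1 + K2" using K by (meson add_mono order.trans)
  qed (use x y LD in simp)
qed
lemma psup_L[simp]: "x \<in> L \<Longrightarrow> y \<in> L \<Longrightarrow> psup x y \<in> L"
proof -
  assume x: "x \<in> L" and y: "y \<in> L"
  obtain K1 K2 where K: "\<forall>i. nm i (x i) \<le> K1" "\<forall>i. nm i (y i) \<le> K2" using LB x y by metis
  show ?thesis unfolding psup_def
  proof (rule LI)
    fix i
    have "nm i (bl_sup (E i) (x i) (y i)) \<le> nm i (x i) + nm i (y i)" using bl.nrm_sup_le[OF B] x y LD by blast
    thus "nm i (bl_sup (E i) (x i) (y i)) \<le> K1 + K2" using K by (meson add_mono order.trans)
  qed (use x y LD in simp)
qed

lemma N_L: "z \<in> N \<Longrightarrow> z \<in> L" using N_iff by blast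
lemma N_lim: "z \<in> N \<Longrightarrow> ((\<lambda>i. nm i (z i)) \<longlongrightarrow> 0) U" using N_iff by blast
lemma N_dom: "(\<And>i. w i \<in> bl_carrier (E i)) \<Longrightarrow> z \<in> N \<Longrightarrow> (\<And>i. nm i (w i) \<le> nm i (z i)) \<Longrightarrow> w \<in> N"
proof -
  assume a: "\<And>i. w i \<in> bl_carrier (E i)" "z \<in> N" "\<And>i. nm i (w i) \<le> nm i (z i)"
  have "w \<in> L" using L_dom[OF a(1) N_L[OF a(2)] a(3)] .
  moreover have "((\<lambda>i. nm i (w i)) \<longlongrightarrow> 0) U"
    using a by (intro null_cmp[OF _ N_lim[OF a(2)]] always_eventually) simp
  ultimately show ?thesis using N_iff by blast
qed
lemma N_add: "z \<in> N \<Longrightarrow> w \<in> N \<Longrightarrow> padd z w \<in> N"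
proof -
  assume z: "z \<in> N" and w: "w \<in> N"
  have "((\<lambda>i. nm i (z i) + nm i (w i)) \<longlongrightarrow> 0 + 0) U" using z w N_lim by (intro tendsto_add) auto
  hence g: "((\<lambda>i. nm i (z i) + nm i (w i)) \<longlongrightarrow> 0) U" by simp
  have "((\<lambda>i. nm i (padd z w i)) \<longlongrightarrow> 0) U"
    using z w N_L LD by (intro null_cmp[OF _ g] always_eventually) (simp add: padd_def nrm_tri)
  thus ?thesis using z w N_L N_iff by simp
qed
lemma N_sm: "z \<in> N \<Longrightarrow> psm c z \<in> N"
proof -
  assume z: "z \<in> N"
  have "((\<lambda>i. \<bar>c\<bar> * nm i (z i)) \<longlongrightarrow> \<bar>c\<bar> * 0) U" using z N_lim by (intro tendsto_mult) auto
  hence "((\<lambda>i. nm i (psm c z i)) \<longlongrightarrow> 0) U" using z N_L LD by (simp add: psm_def nrm_sm)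
  thus ?thesis using z N_L N_iff by simp
qed
lemma N_neg: "z \<in> N \<Longrightarrow> pneg z \<in> N"
  using N_sm[of z "-1"] by (simp add: psm_def pneg_def bl_neg_def)
lemma N_abs: "z \<in> N \<Longrightarrow> pabs z \<in> N"
proof -
  assume z: "z \<in> N"
  have c: "\<And>i. z i \<in> bl_carrier (E i)" using N_L[OF z] LD by blast
  show ?thesis unfolding pabs_def by (rule N_dom[OF _ z]) (simp_all add: c bl.nrm_ab[OF B])
qed
lemma N_zero: "pzero \<in> N" using pzero_L by (simp add: N_iff pzero_def)

lemma eqv_N: "x \<in> L \<Longrightarrow> y \<in> L \<Longrightarrow> eqv x y \<longleftrightarrow> pmin x y \<in> N"
  unfolding eqv_def N_iff pmin_def using L_minus by auto

lemma eqv_add: "eqv x x' \<Longrightarrow> eqv y y' \<Longrightarrow> eqv (padd x y) (padd x' y')"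
proof -
  assume a: "eqv x x'" "eqv y y'"
  hence L4: "x \<in> L" "x' \<in> L" "y \<in> L" "y' \<in> L" unfolding eqv_def by auto
  have "pmin x x' \<in> N" "pmin y y' \<in> N" using a L4 eqv_N by auto
  hence "padd (pmin x x') (pmin y y') \<in> N" by (rule N_add)
  moreover have "padd (pmin x x') (pmin y y') = pmin (padd x y) (padd x' y')"
  proof (rule ext)
    fix i
    have "x i \<in> bl_carrier (E i)" "x' i \<in> bl_carrier (E i)" "y i \<in> bl_carrier (E i)" "y' i \<in> bl_carrier (E i)"
      using L4 LD by auto
    thus "padd (pmin x x') (pmin y y') i = pmin (padd x y) (padd x' y') i"
      by (simp add: padd_def pmin_def alg)
  qed
  ultimately show ?thesis using L4 eqv_N by simp
qed
lemma eqv_sm: "eqv x x' \<Longrightarrow> eqv (psm c x) (psm c x')"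
proof -
  assume a: "eqv x x'"
  hence L2: "x \<in> L" "x' \<in> L" unfolding eqv_def by auto
  have "pmin x x' \<in> N" using a L2 eqv_N by auto
  hence "psm c (pmin x x') \<in> N" by (rule N_sm)
  moreover have "psm c (pmin x x') = pmin (psm c x) (psm c x')"
  proof (rule ext)
    fix i
    have "x i \<in> bl_carrier (E i)" "x' i \<in> bl_carrier (E i)" using L2 LD by auto
    thus "psm c (pmin x x') i = pmin (psm c x) (psm c x') i"
      by (simp add: psm_def pmin_def minus_def' smdist2 sm_neg)
  qed
  ultimately show ?thesis using L2 eqv_N by simp
qed

lemma repE: "x \<in> L \<Longrightarrow> eqv (up_rep (cl x)) x" using rep_eqv eqv_sym by blast

lemma add_UP: "x \<in> L \<Longrightarrow> y \<in> L \<Longrightarrow> bl_add UP (cl x) (cl y) = cl (padd x y)"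
proof -
  assume x: "x \<in> L" and y: "y \<in> L"
  have "bl_add UP (cl x) (cl y) = cl (padd (up_rep (cl x)) (up_rep (cl y)))"
    by (simp add: ultraproduct_def padd_def)
  also have "\<dots> = cl (padd x y)" using eqv_add[OF repE[OF x] repE[OF y]] x y rep_L
    by (subst cl_eq) auto
  finally show ?thesis .
qed
lemma sm_UP: "x \<in> L \<Longrightarrow> bl_smult UP c (cl x) = cl (psm c x)"
proof -
  assume x: "x \<in> L"
  have "bl_smult UP c (cl x) = cl (psm c (up_rep (cl x)))"
    by (simp add: ultraproduct_def psm_def)
  also have "\<dots> = cl (psm c x)" using eqv_sm[OF repE[OF x]] x rep_L
    by (subst cl_eq) auto
  finally show ?thesis .
qed
lemma neg_UP: "x \<in> L \<Longrightarrow> bl_neg UP (cl x) = cl (pneg x)"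
  unfolding bl_neg_def using sm_UP by (simp add: psm_def pneg_def bl_neg_def)
lemma minus_UP: "x \<in> L \<Longrightarrow> y \<in> L \<Longrightarrow> bl_minus UP (cl x) (cl y) = cl (pmin x y)"
proof -
  assume x: "x \<in> L" and y: "y \<in> L"
  have "bl_minus UP (cl x) (cl y) = bl_add UP (cl x) (cl (pneg y))" using neg_UP[OF y] by (simp add: bl_minus_def)
  also have "\<dots> = cl (padd x (pneg y))" using add_UP[OF x pneg_L[OF y]] .
  finally show ?thesis by (simp add: padd_def pneg_def pmin_def bl_minus_def)
qed
lemma zero_UP: "bl_zero UP = cl pzero" by (simp add: ultraproduct_def pzero_def)

lemma le_transfer: "eqv x x' \<Longrightarrow> eqv y y' \<Longrightarrow> z \<in> N \<Longrightarrow> (\<forall>i. bl_le (E i) (bl_add (E i) (x i) (z i)) (y i)) \<Longrightarrow>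
   \<exists>z'\<in>N. \<forall>i. bl_le (E i) (bl_add (E i) (x' i) (z' i)) (y' i)"
proof -
  assume ex: "eqv x x'" and ey: "eqv y y'" and z: "z \<in> N" and h: "\<forall>i. bl_le (E i) (bl_add (E i) (x i) (z i)) (y i)"
  have L4: "x \<in> L" "x' \<in> L" "y \<in> L" "y' \<in> L" using ex ey unfolding eqv_def by auto
  let ?z = "padd (padd z (pmin x x')) (pmin y' y)"
  have "pmin x x' \<in> N" using ex L4 eqv_N by blast
  moreover have "pmin y' y \<in> N" using eqv_sym[OF ey] L4 eqv_N by blast
  ultimately have "?z \<in> N" using z by (intro N_add)
  moreover have "\<forall>i. bl_le (E i) (bl_add (E i) (x' i) (?z i)) (y' i)"
  proof
    fix i
    have c: "x i \<in> bl_carrier (E i)" "x' i \<in> bl_carrier (E i)" "y i \<in> bl_carrier (E i)" "y' i \<in> bl_carrier (E i)"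
      "z i \<in> bl_carrier (E i)" using L4 z N_L LD by auto
    have "bl_le (E i) (bl_add (E i) (bl_add (E i) (x i) (z i)) (bl_minus (E i) (y' i) (y i)))
      (bl_add (E i) (y i) (bl_minus (E i) (y' i) (y i)))" using h c by (intro bl.le_add[OF B]) auto
    moreover have "bl_add (E i) (bl_add (E i) (x i) (z i)) (bl_minus (E i) (y' i) (y i)) = bl_add (E i) (x' i) (?z i)"
      using c by (simp add: padd_def pmin_def alg)
    moreover have "bl_add (E i) (y i) (bl_minus (E i) (y' i) (y i)) = y' i" using c by (simp add: alg)
    ultimately show "bl_le (E i) (bl_add (E i) (x' i) (?z i)) (y' i)" by simp
  qed
  ultimately show ?thesis by blast
qed

lemma le_UP: "x \<in> L \<Longrightarrow> y \<in> L \<Longrightarrow>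
   bl_le UP (cl x) (cl y) \<longleftrightarrow> (\<exists>z\<in>N. \<forall>i. bl_le (E i) (bl_add (E i) (x i) (z i)) (y i))"
proof
  assume x: "x \<in> L" and y: "y \<in> L"
  { assume "bl_le UP (cl x) (cl y)"
    then obtain z where "z \<in> N" "\<forall>i. bl_le (E i) (bl_add (E i) (up_rep (cl x) i) (z i)) (up_rep (cl y) i)"
      by (auto simp: ultraproduct_def)
    thus "\<exists>z\<in>N. \<forall>i. bl_le (E i) (bl_add (E i) (x i) (z i)) (y i)"
      using le_transfer[OF repE[OF x] repE[OF y]] by blast }
  { assume "\<exists>z\<in>N. \<forall>i. bl_le (E i) (bl_add (E i) (x i) (z i)) (y i)"
    then obtain z where "z \<in> N" "\<forall>i. bl_le (E i) (bl_add (E i) (x i) (z i)) (y i)" by blast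
    then obtain z' where "z' \<in> N" "\<forall>i. bl_le (E i) (bl_add (E i) (up_rep (cl x) i) (z' i)) (up_rep (cl y) i)"
      using le_transfer[OF rep_eqv[OF x] rep_eqv[OF y]] by blast
    thus "bl_le UP (cl x) (cl y)" using x y by (auto simp: ultraproduct_def) }
qed

lemma le_UP_carrier: "bl_le UP X Y \<Longrightarrow> X \<in> bl_carrier UP \<and> Y \<in> bl_carrier UP"
  by (simp add: ultraproduct_def)

lemma UP_antisym: "bl_le UP X Y \<Longrightarrow> bl_le UP Y X \<Longrightarrow> X = Y"
proof -
  assume h1: "bl_le UP X Y" and h2: "bl_le UP Y X"
  have X: "X \<in> bl_carrier UP" and Y: "Y \<in> bl_carrier UP" using h1 le_UP_carrier by auto
  define x where "x = up_rep X"
  define y where "y = up_rep Y"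
  have x: "x \<in> L" "cl x = X" and y: "y \<in> L" "cl y = Y" using carrier_rep X Y x_def y_def by auto
  obtain z where z: "z \<in> N" "\<forall>i. bl_le (E i) (bl_add (E i) (x i) (z i)) (y i)" using h1 le_UP x y by auto
  obtain z' where z': "z' \<in> N" "\<forall>i. bl_le (E i) (bl_add (E i) (y i) (z' i)) (x i)" using h2 le_UP x y by auto
  have "((\<lambda>i. 2 * nm i (z i) + nm i (z' i)) \<longlongrightarrow> 2 * 0 + 0) U"
    using z z' N_lim by (intro tendsto_intros) auto
  hence g: "((\<lambda>i. 2 * nm i (z i) + nm i (z' i)) \<longlongrightarrow> 0) U" by simp
  have "((\<lambda>i. nm i (bl_minus (E i) (x i) (y i))) \<longlongrightarrow> 0) U"
  proof (rule null_cmp[OF _ g], rule always_eventually, rule allI)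
    fix i
    show "\<bar>nm i (bl_minus (E i) (x i) (y i))\<bar> \<le> 2 * nm i (z i) + nm i (z' i)"
      using bl.antisym_bound[OF B[of i], of "x i" "y i" "z i" "z' i"] z z' x y N_L LD by auto
  qed
  hence "eqv x y" using x y eqv_def by auto
  thus ?thesis using x y cl_eq by auto
qed

lemma sup_is_UP: "x \<in> L \<Longrightarrow> y \<in> L \<Longrightarrow> bl_is_sup UP (cl x) (cl y) (cl (psup x y))"
proof -
  assume x: "x \<in> L" and y: "y \<in> L"
  have cx: "\<And>i. x i \<in> bl_carrier (E i)" and cy: "\<And>i. y i \<in> bl_carrier (E i)" using x y LD by auto
  have s: "psup x y \<in> L" using x y by simp
  have "\<forall>i. bl_le (E i) (bl_add (E i) (x i) (pzero i)) (psup x y i)"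
  proof
    fix i show "bl_le (E i) (bl_add (E i) (x i) (pzero i)) (psup x y i)"
      using bl.sup_ge1[OF B cx cy] cx[of i] by (simp add: pzero_def psup_def)
  qed
  hence 1: "bl_le UP (cl x) (cl (psup x y))" using le_UP[OF x s] N_zero by blast
  have "\<forall>i. bl_le (E i) (bl_add (E i) (y i) (pzero i)) (psup x y i)"
  proof
    fix i show "bl_le (E i) (bl_add (E i) (y i) (pzero i)) (psup x y i)"
      using bl.sup_ge2[OF B cx cy] cy[of i] by (simp add: pzero_def psup_def)
  qed
  hence 2: "bl_le UP (cl y) (cl (psup x y))" using le_UP[OF y s] N_zero by blast
  have 3: "bl_le UP (cl (psup x y)) W" if h1: "bl_le UP (cl x) W" and h2: "bl_le UP (cl y) W" for W
  proof -
    have W: "W \<in> bl_carrier UP" using h1 le_UP_carrier by blast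
    define w where "w = up_rep W"
    have w: "w \<in> L" "cl w = W" using carrier_rep[OF W] w_def by auto
    obtain z where z: "z \<in> N" "\<forall>i. bl_le (E i) (bl_add (E i) (x i) (z i)) (w i)" using h1 le_UP x w by auto
    obtain z' where z': "z' \<in> N" "\<forall>i. bl_le (E i) (bl_add (E i) (y i) (z' i)) (w i)" using h2 le_UP y w by auto
    have cz: "\<And>i. z i \<in> bl_carrier (E i)" "\<And>i. z' i \<in> bl_carrier (E i)" using z z' N_L LD by auto
    let ?t = "pneg (padd (pabs z) (pabs z'))"
    have t: "?t \<in> N" using z z' by (intro N_neg N_add N_abs)
    have "\<forall>i. bl_le (E i) (bl_add (E i) (psup x y i) (?t i)) (w i)"
    proof
      fix i
      have "bl_le (E i) (bl_add (E i) (bl_sup (E i) (x i) (y i))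
         (bl_neg (E i) (bl_add (E i) (bl_abs (E i) (z i)) (bl_abs (E i) (z' i))))) (w i)"
        using z(2) z'(2) by (intro bl.sup_bound[OF B cx cy cz(1) cz(2)]) auto
      thus "bl_le (E i) (bl_add (E i) (psup x y i) (?t i)) (w i)" by (simp add: psup_def pneg_def padd_def pabs_def)
    qed
    hence "bl_le UP (cl (psup x y)) (cl w)" using le_UP[OF s w(1)] t by blast
    thus ?thesis using w(2) by simp
  qed
  show ?thesis unfolding bl_is_sup_def using 1 2 3 s by (auto simp: carrier_UP)
qed

lemma inf_is_UP: "x \<in> L \<Longrightarrow> y \<in> L \<Longrightarrow> bl_is_inf UP (cl x) (cl y) (cl (pinf x y))"
proof -
  assume x: "x \<in> L" and y: "y \<in> L"
  have cx: "\<And>i. x i \<in> bl_carrier (E i)" and cy: "\<And>i. y i \<in> bl_carrier (E i)" using x y LD by auto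
  have s: "pinf x y \<in> L" using x y by simp
  have "\<forall>i. bl_le (E i) (bl_add (E i) (pinf x y i) (pzero i)) (x i)"
  proof
    fix i show "bl_le (E i) (bl_add (E i) (pinf x y i) (pzero i)) (x i)"
      using bl.inf_le1[OF B cx cy] bl.inf_in[OF B cx cy] by (simp add: pzero_def pinf_def)
  qed
  hence 1: "bl_le UP (cl (pinf x y)) (cl x)" using le_UP[OF s x] N_zero by blast
  have "\<forall>i. bl_le (E i) (bl_add (E i) (pinf x y i) (pzero i)) (y i)"
  proof
    fix i show "bl_le (E i) (bl_add (E i) (pinf x y i) (pzero i)) (y i)"
      using bl.inf_le2[OF B cx cy] bl.inf_in[OF B cx cy] by (simp add: pzero_def pinf_def)
  qed
  hence 2: "bl_le UP (cl (pinf x y)) (cl y)" using le_UP[OF s y] N_zero by blast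
  have 3: "bl_le UP W (cl (pinf x y))" if h1: "bl_le UP W (cl x)" and h2: "bl_le UP W (cl y)" for W
  proof -
    have W: "W \<in> bl_carrier UP" using h1 le_UP_carrier by blast
    define w where "w = up_rep W"
    have w: "w \<in> L" "cl w = W" using carrier_rep[OF W] w_def by auto
    have cw: "\<And>i. w i \<in> bl_carrier (E i)" using w LD by auto
    obtain z where z: "z \<in> N" "\<forall>i. bl_le (E i) (bl_add (E i) (w i) (z i)) (x i)" using h1 le_UP x w by auto
    obtain z' where z': "z' \<in> N" "\<forall>i. bl_le (E i) (bl_add (E i) (w i) (z' i)) (y i)" using h2 le_UP y w by auto
    have cz: "\<And>i. z i \<in> bl_carrier (E i)" "\<And>i. z' i \<in> bl_carrier (E i)" using z z' N_L LD by auto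
    let ?t = "pneg (padd (pabs z) (pabs z'))"
    have t: "?t \<in> N" using z z' by (intro N_neg N_add N_abs)
    have "\<forall>i. bl_le (E i) (bl_add (E i) (w i) (?t i)) (pinf x y i)"
    proof
      fix i
      have "bl_le (E i) (bl_add (E i) (w i)
         (bl_neg (E i) (bl_add (E i) (bl_abs (E i) (z i)) (bl_abs (E i) (z' i))))) (bl_inf (E i) (x i) (y i))"
        using z(2) z'(2) by (intro bl.inf_bound[OF B cw cz(1) cz(2)]) auto
      thus "bl_le (E i) (bl_add (E i) (w i) (?t i)) (pinf x y i)" by (simp add: pinf_def pneg_def padd_def pabs_def)
    qed
    hence "bl_le UP (cl w) (cl (pinf x y))" using le_UP[OF w(1) s] t by blast
    thus ?thesis using w(2) by simp
  qed
  show ?thesis unfolding bl_is_inf_def using 1 2 3 s by (auto simp: carrier_UP)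
qed

lemma sup_UP: "x \<in> L \<Longrightarrow> y \<in> L \<Longrightarrow> bl_sup UP (cl x) (cl y) = cl (psup x y)"
proof -
  assume x: "x \<in> L" and y: "y \<in> L"
  have S: "bl_is_sup UP (cl x) (cl y) (cl (psup x y))" by (rule sup_is_UP[OF x y])
  show ?thesis unfolding bl_sup_def
  proof (rule the_equality)
    show "bl_is_sup UP (cl x) (cl y) (cl (psup x y))" by (rule S)
  next
    fix z assume Z: "bl_is_sup UP (cl x) (cl y) z"
    have "bl_le UP z (cl (psup x y))" using Z S unfolding bl_is_sup_def by blast
    moreover have "bl_le UP (cl (psup x y)) z" using Z S unfolding bl_is_sup_def by blast
    ultimately show "z = cl (psup x y)" by (rule UP_antisym)
  qed
qed

lemma inf_UP: "x \<in> L \<Longrightarrow> y \<in> L \<Longrightarrow> bl_inf UP (cl x) (cl y) = cl (pinf x y)"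
proof -
  assume x: "x \<in> L" and y: "y \<in> L"
  have S: "bl_is_inf UP (cl x) (cl y) (cl (pinf x y))" by (rule inf_is_UP[OF x y])
  show ?thesis unfolding bl_inf_def
  proof (rule the_equality)
    show "bl_is_inf UP (cl x) (cl y) (cl (pinf x y))" by (rule S)
  next
    fix z assume Z: "bl_is_inf UP (cl x) (cl y) z"
    have "bl_le UP z (cl (pinf x y))" using Z S unfolding bl_is_inf_def by blast
    moreover have "bl_le UP (cl (pinf x y)) z" using Z S unfolding bl_is_inf_def by blast
    ultimately show "z = cl (pinf x y)" by (rule UP_antisym)
  qed
qed

lemma abs_UP: "x \<in> L \<Longrightarrow> bl_abs UP (cl x) = cl (pabs x)"
proof -
  assume x: "x \<in> L"
  have "bl_abs UP (cl x) = bl_sup UP (cl x) (cl (pneg x))" using neg_UP[OF x] by (simp add: bl_abs_def)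
  also have "\<dots> = cl (psup x (pneg x))" using sup_UP x by simp
  finally show ?thesis by (simp add: psup_def pneg_def pabs_def bl_abs_def)
qed

lemma disj_UP: "x \<in> L \<Longrightarrow> y \<in> L \<Longrightarrow> bl_disjoint UP (cl x) (cl y) \<Longrightarrow>
  ((\<lambda>i. nm i (bl_inf (E i) (bl_abs (E i) (x i)) (bl_abs (E i) (y i)))) \<longlongrightarrow> 0) U"
proof -
  assume x: "x \<in> L" and y: "y \<in> L" and d: "bl_disjoint UP (cl x) (cl y)"
  let ?a = "pinf (pabs x) (pabs y)"
  have a: "?a \<in> L" using x y by simp
  have "cl ?a = cl pzero" using d abs_UP[OF x] abs_UP[OF y] inf_UP[of "pabs x" "pabs y"] x y
    by (simp add: bl_disjoint_def zero_UP)
  hence "pmin ?a pzero \<in> N" using cl_eq[OF a pzero_L] eqv_N[OF a pzero_L] by simp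
  hence "((\<lambda>i. nm i (pmin ?a pzero i)) \<longlongrightarrow> 0) U" by (rule N_lim)
  moreover have "\<And>i. pmin ?a pzero i = ?a i" using a LD by (simp add: pmin_def pzero_def minus_def')
  ultimately show ?thesis by (simp add: pinf_def pabs_def)
qed

end



context bl begin
lemma dist_le: "M \<subseteq> C \<Longrightarrow> m \<in> M \<Longrightarrow> x \<in> C \<Longrightarrow> bl_dist E x M \<le> nrm (vm x m)"
  unfolding bl_dist_def by (rule cInf_lower) (auto intro!: bdd_belowI[of _ 0])

lemma normalize_dist: "y \<in> C \<Longrightarrow> nrm y > 0 \<Longrightarrow> nrm (vm (vs (1 / nrm y) y) y) = \<bar>1 - nrm y\<bar>"
proof -
  assume y: "y \<in> C" and p: "nrm y > 0"
  have "vm (vs (1 / nrm y) y) y = vs (1 / nrm y + -1) y"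
    using smdist1[OF y, of "1 / nrm y" "-1"] by (simp add: minus_def' bl_neg_def)
  hence "nrm (vm (vs (1 / nrm y) y) y) = \<bar>1 / nrm y - 1\<bar> * nrm y" using y by (simp add: nrm_sm)
  also have "\<dots> = \<bar>(1 / nrm y - 1) * nrm y\<bar>" using p by (simp add: abs_mult)
  also have "(1 / nrm y - 1) * nrm y = 1 - nrm y" using p by (simp add: field_simps)
  finally show ?thesis .
qed

lemma normalize_norm: "y \<in> C \<Longrightarrow> nrm y > 0 \<Longrightarrow> nrm (vs (1 / nrm y) y) = 1"
  by (simp add: nrm_sm)
end

lemma cs_sub: "closed_subspace E M \<Longrightarrow> M \<subseteq> bl_carrier E" unfolding closed_subspace_def by blast
lemma cs_zero: "closed_subspace E M \<Longrightarrow> bl_zero E \<in> M" unfolding closed_subspace_def by blast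
lemma cs_add: "closed_subspace E M \<Longrightarrow> x \<in> M \<Longrightarrow> y \<in> M \<Longrightarrow> bl_add E x y \<in> M" unfolding closed_subspace_def by blast
lemma cs_sm: "closed_subspace E M \<Longrightarrow> x \<in> M \<Longrightarrow> bl_smult E c x \<in> M" unfolding closed_subspace_def by blast
lemma cs_lim: "closed_subspace E M \<Longrightarrow> (\<And>k::nat. s k \<in> M) \<Longrightarrow> x \<in> bl_carrier E \<Longrightarrow>
   (\<And>e. e > 0 \<Longrightarrow> \<exists>N. \<forall>k\<ge>N. bl_norm E (bl_minus E (s k) x) < e) \<Longrightarrow> x \<in> M"
  unfolding closed_subspace_def by blast

context up begin

lemma sub_mem: "X \<in> ultraproduct_sub E U M \<longleftrightarrow> (\<exists>x. x \<in> L \<and> (\<forall>i. x i \<in> M i) \<and> X = cl x)"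
  unfolding ultraproduct_sub_def by auto

lemma sub_closed:
  assumes CS: "\<And>i. closed_subspace (E i) (M i)"
  shows "closed_subspace UP (ultraproduct_sub E U M)"
proof -
  let ?S = "ultraproduct_sub E U M"
  have sub: "?S \<subseteq> bl_carrier UP" by (auto simp: sub_mem carrier_UP)
  have zero: "bl_zero UP \<in> ?S" unfolding sub_mem zero_UP
    using pzero_L cs_zero[OF CS] by (auto simp: pzero_def)
  have add: "bl_add UP X Y \<in> ?S" if XS: "X \<in> ?S" and YS: "Y \<in> ?S" for X Y
  proof -
    obtain x where x: "x \<in> L" "\<forall>i. x i \<in> M i" "X = cl x" using XS sub_mem by blast
    obtain y where y: "y \<in> L" "\<forall>i. y i \<in> M i" "Y = cl y" using YS sub_mem by blast
    have "bl_add UP X Y = cl (padd x y)" using add_UP x y by simp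
    moreover have "\<forall>i. padd x y i \<in> M i" using x y cs_add[OF CS] by (simp add: padd_def)
    ultimately show ?thesis unfolding sub_mem using padd_L[OF x(1) y(1)] by blast
  qed
  have sm: "bl_smult UP c X \<in> ?S" if XS: "X \<in> ?S" for X c
  proof -
    obtain x where x: "x \<in> L" "\<forall>i. x i \<in> M i" "X = cl x" using XS sub_mem by blast
    have "bl_smult UP c X = cl (psm c x)" using sm_UP x by simp
    moreover have "\<forall>i. psm c x i \<in> M i" using x cs_sm[OF CS] by (simp add: psm_def)
    ultimately show ?thesis unfolding sub_mem using psm_L[OF x(1)] by blast
  qed
  have lim: "X \<in> ?S" if s: "\<forall>k::nat. s k \<in> ?S" and X: "X \<in> bl_carrier UP"
    and conv: "\<forall>e>0. \<exists>N. \<forall>k\<ge>N. bl_norm UP (bl_minus UP (s k) X) < e" for s X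
  proof -
    define p where "p = up_rep X"
    have p: "p \<in> L" "cl p = X" using carrier_rep[OF X] p_def by auto
    have cp: "\<And>i. p i \<in> bl_carrier (E i)" using p LD by auto
    have "\<forall>k. \<exists>m. m \<in> L \<and> (\<forall>i. m i \<in> M i) \<and> s k = cl m" using s sub_mem by blast
    hence "\<exists>m. \<forall>k. m k \<in> L \<and> (\<forall>i. m k i \<in> M i) \<and> s k = cl (m k)" by (rule choice)
    then obtain m where m0: "\<forall>k. m k \<in> L \<and> (\<forall>i. m k i \<in> M i) \<and> s k = cl (m k)" by blast
    hence m: "\<And>k. m k \<in> L" "\<And>k i. m k i \<in> M i" "\<And>k. s k = cl (m k)" by auto
    have cm: "\<And>k i. m k i \<in> bl_carrier (E i)" using m LD by auto
    define f where "f k i = nm i (bl_minus (E i) (m k i) (p i))" for k i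
    have flim: "((\<lambda>i. f k i) \<longlongrightarrow> bl_norm UP (bl_minus UP (s k) X)) U" for k
      using norm_cl[OF pmin_L[OF m(1) p(1)]] minus_UP[OF m(1) p(1)] m(3) p(2)
      by (simp add: f_def pmin_def)
    have "\<forall>j::nat. \<exists>K. bl_norm UP (bl_minus UP (s K) X) < 1 / (Suc j)"
    proof
      fix j :: nat
      have "(1::real) / Suc j > 0" by simp
      then obtain N where "\<forall>k\<ge>N. bl_norm UP (bl_minus UP (s k) X) < 1 / Suc j" using conv by blast
      thus "\<exists>K. bl_norm UP (bl_minus UP (s K) X) < 1 / (Suc j)" by blast
    qed
    hence "\<exists>K. \<forall>j. bl_norm UP (bl_minus UP (s (K j)) X) < 1 / (Suc j)" by (rule choice)
    then obtain K where K: "\<And>j. bl_norm UP (bl_minus UP (s (K j)) X) < 1 / (Suc j)" by blast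
    define P where "P j i \<longleftrightarrow> f (K j) i < 1 / Suc j" for j i
    have evP: "eventually (P j) U" for j
      unfolding P_def using order_tendstoD(2)[OF flim K] .
    have evB: "eventually (\<lambda>i. \<forall>l\<in>{..j}. P l i) U" for j
      by (rule eventually_ball_finite) (auto simp: evP)
    define Jf where "Jf i = (LEAST j. \<not> P j i)" for i
    define mm where "mm i = (if \<forall>j. P j i then p i else
        (if Jf i = 0 then bl_zero (E i) else m (K (Jf i - 1)) i))" for i
    have Jf1: "\<not> P (Jf i) i" if "\<not> (\<forall>j. P j i)" for i
      using that unfolding Jf_def by (metis LeastI)
    have Jf2: "P l i" if "l < Jf i" for l i
      using that unfolding Jf_def using not_less_Least by blast
    have pM: "p i \<in> M i" if "\<forall>j. P j i" for i
    proof (rule cs_lim[OF CS, of "\<lambda>j. m (K j) i"])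
      show "\<And>k. m (K k) i \<in> M i" using m by simp
      show "p i \<in> bl_carrier (E i)" by (rule cp)
      fix e :: real assume e: "e > 0"
      obtain N :: nat where N: "1 / Suc N < e" using e by (metis nat_approx_posE)
      have "\<forall>k\<ge>N. nm i (bl_minus (E i) (m (K k) i) (p i)) < e"
      proof (intro allI impI)
        fix k assume k: "N \<le> k"
        have "nm i (bl_minus (E i) (m (K k) i) (p i)) < 1 / Suc k" using that P_def f_def by simp
        also have "\<dots> \<le> 1 / Suc N" by (rule frac_le) (use k in auto)
        finally show "nm i (bl_minus (E i) (m (K k) i) (p i)) < e" using N by simp
      qed
      thus "\<exists>N. \<forall>k\<ge>N. nm i (bl_minus (E i) (m (K k) i) (p i)) < e" by blast
    qed
    have mmM: "mm i \<in> M i" for i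
    proof (cases "\<forall>j. P j i")
      case True thus ?thesis using pM[OF True] by (simp add: mm_def)
    next
      case False thus ?thesis using cs_zero[OF CS] m(2) by (auto simp: mm_def)
    qed
    have cmm: "mm i \<in> bl_carrier (E i)" for i using mmM cs_sub[OF CS] by blast
    have close: "nm i (bl_minus (E i) (mm i) (p i)) \<le> 1 / Jf i"
      if "\<not> (\<forall>j. P j i)" "Jf i > 0" for i
    proof -
      have "mm i = m (K (Jf i - 1)) i" using that by (auto simp: mm_def)
      moreover have "P (Jf i - 1) i" using that Jf2 by simp
      ultimately show ?thesis using that by (simp add: P_def f_def less_imp_le)
    qed
    have bnd: "nm i (mm i) \<le> nm i (p i) + 1" for i
    proof (cases "\<forall>j. P j i")
      case True thus ?thesis by (simp add: mm_def)
    next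
      case False
      show ?thesis
      proof (cases "Jf i = 0")
        case True thus ?thesis using False cp[of i] nrm_ge0 by (simp add: mm_def)
      next
        case J0: False
        have "nm i (mm i) - nm i (p i) \<le> nm i (bl_minus (E i) (mm i) (p i))" using nrm_minus_ge cmm cp by blast
        also have "\<dots> \<le> 1 / Jf i" using close[OF False] J0 by simp
        also have "\<dots> \<le> 1" using J0 by simp
        finally show ?thesis by simp
      qed
    qed
    obtain Kp where Kp: "\<forall>i. nm i (p i) \<le> Kp" using LB p(1) by blast
    have mmL: "mm \<in> L"
    proof (rule LI[of _ "Kp + 1"])
      fix i show "mm i \<in> bl_carrier (E i)" by (rule cmm)
      show "nm i (mm i) \<le> Kp + 1" using bnd[of i] Kp by (meson add_right_mono order.trans)
    qed
    have "((\<lambda>i. nm i (bl_minus (E i) (mm i) (p i))) \<longlongrightarrow> 0) U"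
    proof (rule tendstoI)
      fix e :: real assume e: "e > 0"
      obtain j :: nat where j: "1 / Suc j < e" using e by (metis nat_approx_posE)
      show "eventually (\<lambda>i. dist (nm i (bl_minus (E i) (mm i) (p i))) 0 < e) U"
        using evB[of j]
      proof (rule eventually_mono)
        fix i assume Bi: "\<forall>l\<in>{..j}. P l i"
        have "nm i (bl_minus (E i) (mm i) (p i)) < e"
        proof (cases "\<forall>j. P j i")
          case True
          hence "mm i = p i" by (simp add: mm_def)
          thus ?thesis using e cp by (simp add: minus_def')
        next
          case False
          have "Jf i \<notin> {..j}" using Jf1[OF False] Bi by blast
          hence Jj: "Jf i > j" by simp
          hence "nm i (bl_minus (E i) (mm i) (p i)) \<le> 1 / Jf i" using close[OF False] by simp
          also have "\<dots> \<le> 1 / Suc j" by (rule frac_le) (use Jj in auto)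
          finally show ?thesis using j by simp
        qed
        thus "dist (nm i (bl_minus (E i) (mm i) (p i))) 0 < e" using cmm cp by simp
      qed
    qed
    hence "eqv mm p" using mmL p unfolding eqv_def by simp
    hence "cl mm = X" using cl_eq[OF mmL p(1)] p(2) by simp
    thus ?thesis using mmL mmM sub_mem by auto
  qed
  show ?thesis unfolding closed_subspace_def using sub zero add sm lim by blast
qed

lemma main_disp:
  assumes D: "\<And>i. dispersed n r (E i) (M i)"
    and Xc: "\<forall>k<n. X k \<in> bl_carrier UP \<and> bl_norm UP (X k) = 1"
    and Xd: "\<forall>k<n. \<forall>l<n. k \<noteq> l \<longrightarrow> bl_disjoint UP (X k) (X l)"
  shows "\<exists>k<n. bl_dist UP (X k) (ultraproduct_sub E U M) \<ge> r"
proof -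
  let ?S = "ultraproduct_sub E U M"
  have CS: "\<And>i. closed_subspace (E i) (M i)" using D unfolding dispersed_def by blast
  define x where "x k = up_rep (X k)" for k
  have xL: "x k \<in> L" "cl (x k) = X k" if "k < n" for k using carrier_rep Xc that x_def by auto
  have cx: "x k i \<in> bl_carrier (E i)" if "k < n" for k i using xL[OF that] LD by blast
  have norm1: "((\<lambda>i. nm i (x k i)) \<longlongrightarrow> 1) U" if "k < n" for k
    using norm_cl[OF xL(1)[OF that]] xL(2)[OF that] Xc that by simp
  have dis0: "((\<lambda>i. nm i (bl_inf (E i) (bl_abs (E i) (x k i)) (bl_abs (E i) (x l i)))) \<longlongrightarrow> 0) U"
    if "k < n" "l < n" "k \<noteq> l" for k l
    using disj_UP[OF xL(1)[OF that(1)] xL(1)[OF that(2)]] xL(2) that Xd by simp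
  define y where "y k i = bl.lift (E i) (\<lambda>k. x k i) n k" for k i
  have cy: "y k i \<in> bl_carrier (E i)" if "k < n" for k i
    unfolding y_def using bl.lift_in[OF B[of i], of n "\<lambda>k. x k i" k] cx that by blast
  have ydisj: "bl_disjoint (E i) (y k i) (y l i)" if "k < n" "l < n" "k \<noteq> l" for k l i
    unfolding y_def bl_disjoint_def using bl.lift_disj[OF B[of i], of n "\<lambda>k. x k i" k l] cx that by blast
  define e1 where "e1 k i = nm i (bl_minus (E i) (x k i) (y k i))" for k i
  have e1_0: "((\<lambda>i. e1 k i) \<longlongrightarrow> 0) U" if k: "k < n" for k
  proof -
    let ?g = "\<lambda>i. \<Sum>l<n. if l = k then 0 else nm i (bl_inf (E i) (bl_abs (E i) (x k i)) (bl_abs (E i) (x l i)))"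
    have g: "(?g \<longlongrightarrow> 0) U"
    proof (rule tendsto_null_sum)
      fix l assume "l \<in> {..<n}"
      thus "((\<lambda>i. if l = k then 0 else nm i (bl_inf (E i) (bl_abs (E i) (x k i)) (bl_abs (E i) (x l i)))) \<longlongrightarrow> 0) U"
        using dis0[of k l] k by (cases "l = k") auto
    qed
    have "\<forall>i. \<bar>e1 k i\<bar> \<le> ?g i"
    proof
      fix i
      have "e1 k i \<le> ?g i" unfolding e1_def y_def
        using bl.lift_close[OF B[of i], of n "\<lambda>k. x k i" k] cx k by blast
      moreover have "e1 k i \<ge> 0" unfolding e1_def using cx cy k by simp
      ultimately show "\<bar>e1 k i\<bar> \<le> ?g i" by simp
    qed
    thus ?thesis by (intro null_cmp[OF _ g] always_eventually)
  qed
  have ny: "((\<lambda>i. nm i (y k i)) \<longlongrightarrow> 1) U" if k: "k < n" for k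
  proof -
    have "((\<lambda>i. nm i (y k i) - nm i (x k i)) \<longlongrightarrow> 0) U"
    proof (rule null_cmp[OF _ e1_0[OF k]], rule always_eventually, rule allI)
      fix i
      have "nm i (y k i) - nm i (x k i) \<le> nm i (bl_minus (E i) (y k i) (x k i))" using nrm_minus_ge cx cy k by blast
      moreover have "nm i (x k i) - nm i (y k i) \<le> nm i (bl_minus (E i) (x k i) (y k i))" using nrm_minus_ge cx cy k by blast
      moreover have "nm i (bl_minus (E i) (y k i) (x k i)) = nm i (bl_minus (E i) (x k i) (y k i))"
        using dist_sym cx cy k by blast
      ultimately show "\<bar>nm i (y k i) - nm i (x k i)\<bar> \<le> e1 k i" unfolding e1_def by linarith
    qed
    from tendsto_add[OF this norm1[OF k]] show ?thesis by simp
  qed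
  have evpos: "eventually (\<lambda>i. \<forall>k\<in>{..<n}. nm i (y k i) > 0) U"
    by (rule eventually_ball_finite) (auto intro: order_tendstoD(1)[OF ny])
  define z where "z k i = bl_smult (E i) (1 / nm i (y k i)) (y k i)" for k i
  have evd: "eventually (\<lambda>i. \<exists>k<n. bl_dist (E i) (z k i) (M i) \<ge> r) U"
    using evpos
  proof (rule eventually_mono)
    fix i assume pos: "\<forall>k\<in>{..<n}. nm i (y k i) > 0"
    have h1: "\<forall>k<n. z k i \<in> bl_carrier (E i) \<and> nm i (z k i) = 1"
      using pos cy bl.normalize_norm[OF B] unfolding z_def by auto
    have h2: "\<forall>k<n. \<forall>l<n. k \<noteq> l \<longrightarrow> bl_disjoint (E i) (z k i) (z l i)"
    proof (intro allI impI)
      fix k l assume "k < n" "l < n" "k \<noteq> l"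
      thus "bl_disjoint (E i) (z k i) (z l i)" unfolding z_def
        using bl.disj_scale'[OF B cy cy ydisj] pos by simp
    qed
    have "\<forall>w::nat \<Rightarrow> 'a. (\<forall>k<n. w k \<in> bl_carrier (E i) \<and> nm i (w k) = 1) \<and>
        (\<forall>k<n. \<forall>l<n. k \<noteq> l \<longrightarrow> bl_disjoint (E i) (w k) (w l)) \<longrightarrow>
        (\<exists>k<n. bl_dist (E i) (w k) (M i) \<ge> r)" using D[of i] unfolding dispersed_def by blast
    hence "(\<forall>k<n. z k i \<in> bl_carrier (E i) \<and> nm i (z k i) = 1) \<and>
        (\<forall>k<n. \<forall>l<n. k \<noteq> l \<longrightarrow> bl_disjoint (E i) (z k i) (z l i)) \<longrightarrow>
        (\<exists>k<n. bl_dist (E i) (z k i) (M i) \<ge> r)" by (rule spec)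
    thus "\<exists>k<n. bl_dist (E i) (z k i) (M i) \<ge> r" using h1 h2 by blast
  qed
  obtain k where k: "k < n" and evk: "eventually (\<lambda>i. bl_dist (E i) (z k i) (M i) \<ge> r) U"
    using ultra_pick[OF UF evd] by blast
  define err where "err i = \<bar>1 - nm i (y k i)\<bar> + e1 k i" for i
  have err0: "(err \<longlongrightarrow> 0) U"
  proof -
    have "((\<lambda>i. 1 - nm i (y k i)) \<longlongrightarrow> 1 - 1) U" using ny[OF k] by (intro tendsto_diff) auto
    hence "((\<lambda>i. \<bar>1 - nm i (y k i)\<bar>) \<longlongrightarrow> 0) U" using tendsto_rabs_zero by simp
    from tendsto_add[OF this e1_0[OF k]] show ?thesis unfolding err_def by simp
  qed
  have Sne: "?S \<noteq> {}" using cs_zero[OF sub_closed[OF CS]] by blast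
  have "r \<le> bl_norm UP (bl_minus UP (X k) W)" if W: "W \<in> ?S" for W
  proof -
    obtain w where w: "w \<in> L" "\<forall>i. w i \<in> M i" "W = cl w" using W sub_mem by blast
    have cw: "\<And>i. w i \<in> bl_carrier (E i)" using w(1) LD by blast
    have lim: "((\<lambda>i. nm i (bl_minus (E i) (x k i) (w i))) \<longlongrightarrow> bl_norm UP (bl_minus UP (X k) W)) U"
      using norm_cl[OF pmin_L[OF xL(1)[OF k] w(1)]] minus_UP[OF xL(1)[OF k] w(1)] xL(2)[OF k] w(3)
      by (simp add: pmin_def)
    have "eventually (\<lambda>i. r \<le> nm i (bl_minus (E i) (x k i) (w i)) + err i) U"
      using evk evpos
    proof (rule eventually_elim2)
      fix i assume dz: "bl_dist (E i) (z k i) (M i) \<ge> r" and pos: "\<forall>k\<in>{..<n}. nm i (y k i) > 0"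
      have yp: "nm i (y k i) > 0" using pos k by simp
      have cz: "z k i \<in> bl_carrier (E i)" unfolding z_def using cy k by simp
      have "bl_dist (E i) (z k i) (M i) \<le> nm i (bl_minus (E i) (z k i) (w i))"
        using bl.dist_le[OF B cs_sub[OF CS] _ cz] w(2) by blast
      also have "\<dots> \<le> nm i (bl_minus (E i) (z k i) (x k i)) + nm i (bl_minus (E i) (x k i) (w i))"
        using dist_tri cz cx k cw by blast
      also have "nm i (bl_minus (E i) (z k i) (x k i)) \<le> nm i (bl_minus (E i) (z k i) (y k i)) + nm i (bl_minus (E i) (y k i) (x k i))"
        using dist_tri cz cx cy k by blast
      also have "nm i (bl_minus (E i) (z k i) (y k i)) = \<bar>1 - nm i (y k i)\<bar>"
        unfolding z_def using bl.normalize_dist[OF B cy yp] k by simp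
      also have "nm i (bl_minus (E i) (y k i) (x k i)) = e1 k i" unfolding e1_def using dist_sym cx cy k by blast
      finally show "r \<le> nm i (bl_minus (E i) (x k i) (w i)) + err i" using dz unfolding err_def by linarith
    qed
    moreover have "((\<lambda>i. nm i (bl_minus (E i) (x k i) (w i)) + err i) \<longlongrightarrow> bl_norm UP (bl_minus UP (X k) W) + 0) U"
      using lim err0 by (rule tendsto_add)
    ultimately show ?thesis using tendsto_lowerbound Unb by fastforce
  qed
  hence "r \<le> bl_dist UP (X k) ?S" unfolding bl_dist_def using Sne by (intro cInf_greatest) auto
  thus ?thesis using k by blast
qed

end

theorem proposition5p9:
  fixes E :: "'i \<Rightarrow> 'a blat" and M :: "'i \<Rightarrow> 'a set" and U :: "'i filter"
    and n :: nat and r :: real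
  assumes "is_ultrafilter U" and "is_free_filter U" and "r > 0"
    and "\<forall>i. banach_lattice (E i)" and "\<forall>i. order_continuous (E i)"
    and "\<forall>i. has_weak_unit (E i)"
    and "\<forall>i. dispersed n r (E i) (M i)"
  shows "dispersed n r (ultraproduct E U) (ultraproduct_sub E U M)"
proof -
  interpret up E U using assms(1,4) by unfold_locales auto
  have D: "\<And>i. dispersed n r (E i) (M i)" using assms(7) by blast
  have CS: "\<And>i. closed_subspace (E i) (M i)" using D unfolding dispersed_def by blast
  show ?thesis unfolding dispersed_def
    using sub_closed[OF CS] main_disp[OF D] by blast
qed

end
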